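(* Let $G$ be a bridgeless cubic graph with at least one $2$-edge-cut and let $(T,\varphi)$ be a cactus representation of all $2$-edge-cuts of $G$ (as described in the context). Let $\{e_1,e_2\}$ be a $2$-edge-cut of $G$ and let $\{a,b\}$ be the corresponding $2$-edge-cut of $T$. Perform the $\{e_1,e_2\}$-reduction in $G$, obtaining graphs $G_1$ and $G_2$ with new edges $e_1'\in E(G_1)$ and $e_2'\in E(G_2)$. Perform the $\{a,b\}$-reduction in $T$, obtaining graphs $T_1$ and $T_2$ (with $T_i$ the part corresponding to $G_i$), and delete any loop thereby created in $T_1$ or $T_2$. Then $(T_1,\varphi|_{V(G_1)})$ and $(T_2,\varphi|_{V(G_2)})$ are cactus representations of all $2$-edge-cuts of $G_1$ and $G_2$, respectively.
   Context: Graphs may have parallel edges; cubic means every vertex has degree $3$; bridgeless means no edge whose removal disconnects more components. A $2$-edge-cut is an inclusion-minimal edge cut of size $2$; in a bridgeless graph with a $2$-edge-cut the minimum edge cuts are exactly the $2$-edge-cuts. A cactus is a connected graph in which each edge lies on at most one cycle ($2$-cycles allowed, no loops). For a connected graph $G$, a cactus representation is a pair $(T,\varphi)$ with $T$ a cactus and $\varphi:V(G)\to V(T)$ such that (1) for every minimum cut $\{S,V(T)\setminus S\}$ of $T$, the partition $X=\{u:\varphi(u)\in S\}$, $V(G)\setminus X$ is a minimum cut of $G$, and (2) every minimum cut $\{X,V(G)\setminus X\}$ of $G$ arises in this way from some minimum cut of $T$. The cactus representation of all $2$-edge-cuts used here is the one obtained by contracting each $3$-edge-connected component of $G$ (a maximal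 vertex set $X$ with at least $3$ edge-disjoint paths... i.e. local edge-connectivity $\lambda(u,v)\ge 3$ for all $u,v\in X$) to a single node: $\varphi$ maps each vertex to the node of its $3$-edge-connected component, each edge $uv$ of $G$ with $\varphi(u)\neq\varphi(v)$ (an external edge) corresponds to an edge of $T$ joining $\varphi(u)$ and $\varphi(v)$, and two distinct external edges form a $2$-edge-cut of $G$ if and only if their corresponding edges of $T$ lie on a common cycle of $T$; the $2$-edge-cut $\{a,b\}$ of $T$ corresponding to $\{e_1,e_2\}$ consists of the edges corresponding to $e_1,e_2$. For a $2$-edge-cut $\{f_1,f_2\}$ of a graph $H$, $f_1=x_1y_1$, $f_2=x_2y_2$ with $x_1,x_2$ in one component $A$ of $H-\{f_1,f_2\}$ and $y_1,y_2$ in the other component $B$, the $\{f_1,f_2\}$-reduction replaces $f_1,f_2$ by new edges $x_1x_2$ (in $A$) and $y_1y_2$ (in $B$), giving the two graphs $A+x_1x_2$ and $B+y_1y_2$ (the new edge may be a loop in the cactus case when $x_1=x_2$ or $y_1=y_2$). *)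

theory Defs
  imports Main
begin

text \<open>A graph has a vertex set, an edge set, and for each edge the set of its
  end vertices (one vertex for a loop, two for an ordinary edge).\<close>

record ('v, 'e) mgraph =
  verts :: "'v set"
  edges :: "'e set"
  ends  :: "'e \<Rightarrow> 'v set"

definition wf_graph :: "('v, 'e) mgraph \<Rightarrow> bool" where
  "wf_graph G \<longleftrightarrow> finite (verts G) \<and> finite (edges G) \<and>
     (\<forall>e \<in> edges G. ends G e \<subseteq> verts G \<and> ends G e \<noteq> {} \<and> card (ends G e) \<le> 2)"

definition del_edges :: "('v, 'e) mgraph \<Rightarrow> 'e set \<Rightarrow> ('v, 'e) mgraph" where
  "del_edges G F = G\<lparr>edges := edges G - F\<rparr>"

text \<open>Degree: a loop counts twice.\<close>
definition degree :: "('v, 'e) mgraph \<Rightarrow> 'v \<Rightarrow> nat" where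
  "degree G v = card {e \<in> edges G. v \<in> ends G e \<and> card (ends G e) = 2}
              + 2 * card {e \<in> edges G. ends G e = {v}}"

definition cubic :: "('v, 'e) mgraph \<Rightarrow> bool" where
  "cubic G \<longleftrightarrow> (\<forall>v \<in> verts G. degree G v = 3)"

inductive walk :: "('v, 'e) mgraph \<Rightarrow> 'v \<Rightarrow> 'e list \<Rightarrow> 'v \<Rightarrow> bool" for G where
  walk_nil:  "u \<in> verts G \<Longrightarrow> walk G u [] u"
| walk_cons: "e \<in> edges G \<Longrightarrow> ends G e = {u, x} \<Longrightarrow> walk G x es w \<Longrightarrow> walk G u (e # es) w"

definition reachable :: "('v, 'e) mgraph \<Rightarrow> 'v \<Rightarrow> 'v \<Rightarrow> bool" where
  "reachable G u v \<longleftrightarrow> (\<exists>es. walk G u es v)"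

definition connected :: "('v, 'e) mgraph \<Rightarrow> bool" where
  "connected G \<longleftrightarrow> verts G \<noteq> {} \<and> (\<forall>u \<in> verts G. \<forall>v \<in> verts G. reachable G u v)"

definition components :: "('v, 'e) mgraph \<Rightarrow> 'v set set" where
  "components G = {{v \<in> verts G. reachable G u v} | u. u \<in> verts G}"

definition edge_cut :: "('v, 'e) mgraph \<Rightarrow> 'e set \<Rightarrow> bool" where
  "edge_cut G F \<longleftrightarrow> F \<subseteq> edges G \<and>
     (\<exists>u \<in> verts G. \<exists>v \<in> verts G. reachable G u v \<and> \<not> reachable (del_edges G F) u v)"

definition two_edge_cut :: "('v, 'e) mgraph \<Rightarrow> 'e set \<Rightarrow> bool" where
  "two_edge_cut G F \<longleftrightarrow> card F = 2 \<and> edge_cut G F \<and> (\<forall>F' \<subset> F. \<not> edge_cut G F')"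

definition bridgeless :: "('v, 'e) mgraph \<Rightarrow> bool" where
  "bridgeless G \<longleftrightarrow> (\<forall>e \<in> edges G. \<not> edge_cut G {e})"

text \<open>Local edge-connectivity at least k: k pairwise edge-disjoint u-v walks
  (equivalently, k edge-disjoint u-v paths).\<close>
definition lambda_ge :: "('v, 'e) mgraph \<Rightarrow> nat \<Rightarrow> 'v \<Rightarrow> 'v \<Rightarrow> bool" where
  "lambda_ge G k u v \<longleftrightarrow> (\<exists>Ps. length Ps = k \<and> (\<forall>P \<in> set Ps. walk G u P v) \<and>
     (\<forall>i < k. \<forall>j < k. i \<noteq> j \<longrightarrow> set (Ps ! i) \<inter> set (Ps ! j) = {}))"

text \<open>Cycles (given as edge lists; 2-cycles of parallel edges allowed).\<close>
definition is_cycle :: "('v, 'e) mgraph \<Rightarrow> 'e list \<Rightarrow> bool" where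
  "is_cycle G es \<longleftrightarrow> es \<noteq> [] \<and> distinct es \<and>
     (\<exists>vs. length vs = length es + 1 \<and>
        (\<forall>i < length es. es ! i \<in> edges G \<and> ends G (es ! i) = {vs ! i, vs ! Suc i}) \<and>
        hd vs = last vs \<and> distinct (tl vs))"

definition on_common_cycle :: "('v, 'e) mgraph \<Rightarrow> 'e \<Rightarrow> 'e \<Rightarrow> bool" where
  "on_common_cycle G a b \<longleftrightarrow> (\<exists>es. is_cycle G es \<and> a \<in> set es \<and> b \<in> set es)"

definition cactus :: "('v, 'e) mgraph \<Rightarrow> bool" where
  "cactus T \<longleftrightarrow> wf_graph T \<and> connected T \<and> (\<forall>e \<in> edges T. card (ends T e) = 2) \<and>
     (\<forall>e es1 es2. is_cycle T es1 \<and> is_cycle T es2 \<and> e \<in> set es1 \<and> e \<in> set es2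
        \<longrightarrow> set es1 = set es2)"

definition external_edges :: "('v, 'e) mgraph \<Rightarrow> ('v \<Rightarrow> 'n) \<Rightarrow> 'e set" where
  "external_edges G \<phi> = {e \<in> edges G. card (\<phi> ` ends G e) = 2}"

text \<open>The cactus representation of all 2-edge-cuts of G obtained by contracting each
  3-edge-connected component of G to a node: phi maps each vertex to the node of its
  3-edge-connected component, psi maps external edges bijectively to the edges of T
  (respecting ends), and two distinct external edges form a 2-edge-cut of G iff
  their images lie on a common cycle of T.\<close>
definition cactus_rep_2cuts ::
  "('v, 'e) mgraph \<Rightarrow> ('n, 'f) mgraph \<Rightarrow> ('v \<Rightarrow> 'n) \<Rightarrow> ('e \<Rightarrow> 'f) \<Rightarrow> bool" where
  "cactus_rep_2cuts G T \<phi> \<psi> \<longleftrightarrow>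
     cactus T \<and>
     \<phi> ` verts G = verts T \<and>
     (\<forall>u \<in> verts G. \<forall>v \<in> verts G. \<phi> u = \<phi> v \<longleftrightarrow> lambda_ge G 3 u v) \<and>
     bij_betw \<psi> (external_edges G \<phi>) (edges T) \<and>
     (\<forall>e \<in> external_edges G \<phi>. ends T (\<psi> e) = \<phi> ` ends G e) \<and>
     (\<forall>e1 \<in> external_edges G \<phi>. \<forall>e2 \<in> external_edges G \<phi>. e1 \<noteq> e2 \<longrightarrow>
        (two_edge_cut G {e1, e2} \<longleftrightarrow> on_common_cycle T (\<psi> e1) (\<psi> e2)))"

text \<open>The side S of the {f1,f2}-reduction: keep the vertices of S, the edges inside S,
  and add the new edge f' joining the ends of f1, f2 lying in S (a loop if these coincide).\<close>
definition reduce :: "('v, 'e) mgraph \<Rightarrow> 'e \<Rightarrow> 'e \<Rightarrow> 'v set \<Rightarrow> 'e \<Rightarrow> ('v, 'e) mgraph" where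
  "reduce H f1 f2 S f' =
     \<lparr>verts = S,
      edges = {e \<in> edges H - {f1, f2}. ends H e \<subseteq> S} \<union> {f'},
      ends = (ends H)(f' := (ends H f1 \<union> ends H f2) \<inter> S)\<rparr>"

definition reduce_noloop :: "('v, 'e) mgraph \<Rightarrow> 'e \<Rightarrow> 'e \<Rightarrow> 'v set \<Rightarrow> 'e \<Rightarrow> ('v, 'e) mgraph" where
  "reduce_noloop H f1 f2 S f' =
     (if card ((ends H f1 \<union> ends H f2) \<inter> S) = 1
      then \<lparr>verts = S, edges = {e \<in> edges H - {f1, f2}. ends H e \<subseteq> S}, ends = ends H\<rparr>
      else reduce H f1 f2 S f')"

definition side_of :: "('v, 'e) mgraph \<Rightarrow> 'e set \<Rightarrow> 'v set \<Rightarrow> 'v set" where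
  "side_of H F S = {t \<in> verts H. \<exists>s \<in> S. reachable (del_edges H F) s t}"

end

theory Submission
  imports Defs
begin

lemma wf_del: "wf_graph G \<Longrightarrow> wf_graph (del_edges G F)"
  by (auto simp: wf_graph_def del_edges_def)

lemma del_simps[simp]: "verts (del_edges G F) = verts G" "edges (del_edges G F) = edges G - F"
  "ends (del_edges G F) = ends G"
  by (auto simp: del_edges_def)

lemma del_del: "del_edges (del_edges G F) F' = del_edges G (F \<union> F')"
  by (auto simp: del_edges_def Diff_eq Int_assoc)

lemma del_empty: "del_edges G {} = G"
  by (auto simp: del_edges_def)

lemma walk_last_verts: "walk G u es v \<Longrightarrow> v \<in> verts G"
  by (induction rule: walk.induct) auto

lemma walk_hd_verts0: "walk G u es v \<Longrightarrow> wf_graph G \<Longrightarrow> u \<in> verts G"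
  by (induction rule: walk.induct) (auto simp: wf_graph_def)

lemma walk_hd_verts: "wf_graph G \<Longrightarrow> walk G u es v \<Longrightarrow> u \<in> verts G"
  using walk_hd_verts0 by metis

lemma walk_append: "walk G u es v \<Longrightarrow> walk G v fs w \<Longrightarrow> walk G u (es @ fs) w"
  by (induction rule: walk.induct) (auto intro: walk.intros)

lemma walk_snoc: "walk G u es v \<Longrightarrow> e \<in> edges G \<Longrightarrow> ends G e = {v, x} \<Longrightarrow> x \<in> verts G
   \<Longrightarrow> walk G u (es @ [e]) x"
  by (erule walk_append) (auto intro: walk.intros)

lemma walk_rev0: "walk G u es v \<Longrightarrow> wf_graph G \<Longrightarrow> walk G v (rev es) u"
proof (induction rule: walk.induct)
  case (walk_nil u) then show ?case by (auto intro: walk.intros)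
next
  case (walk_cons e u x es w)
  have "u \<in> verts G" using walk_cons by (auto simp: wf_graph_def)
  then show ?case using walk_cons walk_snoc[of G w "rev es" x e u] by (auto simp: insert_commute)
qed

lemma walk_rev: "wf_graph G \<Longrightarrow> walk G u es v \<Longrightarrow> walk G v (rev es) u"
  using walk_rev0 by metis

lemma walk_del: "walk (del_edges G F) u es v \<longleftrightarrow> walk G u es v \<and> set es \<inter> F = {}"
proof
  assume "walk (del_edges G F) u es v" then show "walk G u es v \<and> set es \<inter> F = {}"
    by (induction rule: walk.induct) (auto intro: walk.intros)
next
  assume "walk G u es v \<and> set es \<inter> F = {}"
  then have "walk G u es v" "set es \<inter> F = {}" by auto
  then show "walk (del_edges G F) u es v"
    by (induction rule: walk.induct) (auto intro: walk.intros)
qed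

lemma walk_mono: "walk G u es v \<Longrightarrow> (\<forall>e\<in>set es. e \<in> edges H \<and> ends H e = ends G e) \<Longrightarrow>
   v \<in> verts H \<Longrightarrow> walk H u es v"
  by (induction rule: walk.induct) (auto intro: walk.intros)

lemma reach_refl: "u \<in> verts G \<Longrightarrow> reachable G u u"
  by (auto simp: reachable_def intro: walk.intros)

lemma reach_sym: "wf_graph G \<Longrightarrow> reachable G u v \<Longrightarrow> reachable G v u"
  by (auto simp: reachable_def intro: walk_rev)

lemma reach_trans: "reachable G u v \<Longrightarrow> reachable G v w \<Longrightarrow> reachable G u w"
  by (auto simp: reachable_def intro: walk_append)

lemma reach_edge: "e \<in> edges G \<Longrightarrow> ends G e = {u, x} \<Longrightarrow> x \<in> verts G \<Longrightarrow> reachable G u x"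
  unfolding reachable_def by (rule exI[of _ "[e]"]) (auto intro: walk.intros)

lemma reach_verts: "wf_graph G \<Longrightarrow> reachable G u v \<Longrightarrow> u \<in> verts G \<and> v \<in> verts G"
  by (auto simp: reachable_def intro: walk_hd_verts walk_last_verts)

fun pth :: "('v, 'e) mgraph \<Rightarrow> 'v list \<Rightarrow> 'e list \<Rightarrow> bool" where
  "pth G [v] [] = True"
| "pth G (u # x # vs) (e # es) = (e \<in> edges G \<and> ends G e = {u, x} \<and> pth G (x # vs) es)"
| "pth G _ _ = False"

lemma pth_iff: "pth G vs es \<longleftrightarrow> length vs = Suc (length es) \<and>
   (\<forall>i<length es. es ! i \<in> edges G \<and> ends G (es ! i) = {vs ! i, vs ! Suc i})"
proof (induction es arbitrary: vs)
  case Nil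
  show ?case
  proof (cases vs)
    case (Cons u ws) then show ?thesis by (cases ws) auto
  qed simp
next
  case (Cons e es)
  show ?case
  proof (cases vs)
    case Nil then show ?thesis by simp
  next
    case (Cons u ws)
    then show ?thesis
    proof (cases ws)
      case Nil then show ?thesis using Cons by simp
    next
      case (Cons x xs)
      show ?thesis using Cons \<open>vs = u # ws\<close> Cons.IH[of "x # xs"]
        by (auto simp: All_less_Suc2)
    qed
  qed
qed

lemma pth_ne: "pth G vs es \<Longrightarrow> vs \<noteq> []"
  by (auto simp: pth_iff)

lemma pth_len: "pth G vs es \<Longrightarrow> length vs = Suc (length es)"
  by (auto simp: pth_iff)

lemma pth_Cons_E: "pth G vs (e # es) \<Longrightarrow> \<exists>u x ws. vs = u # x # ws \<and> e \<in> edges G \<and> ends G e = {u, x} \<and> pth G (x # ws) es"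
proof (cases vs)
  case (Cons u ws)
  assume "pth G vs (e # es)"
  then show ?thesis using Cons by (cases ws) auto
qed simp

lemma pth_Nil_E: "pth G vs [] \<longleftrightarrow> (\<exists>v. vs = [v])"
proof (cases vs)
  case (Cons u ws)
  then show ?thesis by (cases ws) auto
qed simp

lemma pth_append: "pth G vs es \<Longrightarrow> pth G ws fs \<Longrightarrow> last vs = hd ws \<Longrightarrow> pth G (vs @ tl ws) (es @ fs)"
proof (induction G vs es rule: pth.induct)
  case (1 G v)
  then show ?case by (cases ws) auto
next
  case (2 G u x vs e es)
  then show ?case by auto
qed auto

lemma pth_split: "pth G vs (es @ fs) \<Longrightarrow> pth G (take (Suc (length es)) vs) es \<and> pth G (drop (length es) vs) fs"
proof (induction es arbitrary: vs)
  case Nil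
  then show ?case by (cases vs) (auto dest: pth_ne)
next
  case (Cons e es)
  then obtain u x ws where "vs = u # x # ws" using pth_Cons_E[of G vs e "es @ fs"] by auto
  then show ?case using Cons Cons.IH[of "x # ws"] by auto
qed

lemma pth_edges: "pth G vs es \<Longrightarrow> set es \<subseteq> edges G"
  by (induction G vs es rule: pth.induct) auto

lemma pth_ends: "pth G vs es \<Longrightarrow> e \<in> set es \<Longrightarrow> ends G e \<subseteq> set vs"
  by (induction G vs es rule: pth.induct) auto

lemma pth_verts: "pth G vs es \<Longrightarrow> wf_graph G \<Longrightarrow> hd vs \<in> verts G \<Longrightarrow> set vs \<subseteq> verts G"
  by (induction G vs es rule: pth.induct) (auto simp: wf_graph_def)

lemma pth_distinct: "pth G vs es \<Longrightarrow> distinct vs \<Longrightarrow> distinct es"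
proof (induction G vs es rule: pth.induct)
  case (2 G u x vs e es)
  then have "e \<notin> set es" using pth_ends[of G "x # vs" es e] by auto
  then show ?case using 2 by auto
qed auto

lemma pth_mono: "pth G vs es \<Longrightarrow> (\<forall>e\<in>set es. e \<in> edges H \<and> ends H e = ends G e) \<Longrightarrow> pth H vs es"
  by (induction G vs es rule: pth.induct) auto

lemma walk_pth: "walk G u es v \<Longrightarrow> \<exists>vs. pth G vs es \<and> hd vs = u \<and> last vs = v"
proof (induction rule: walk.induct)
  case (walk_nil u) then show ?case by (intro exI[of _ "[u]"]) auto
next
  case (walk_cons e u x es w)
  then obtain vs where "pth G vs es" "hd vs = x" "last vs = w" by auto
  then show ?case using walk_cons
    by (intro exI[of _ "u # vs"]) (cases vs; auto)
qed

lemma pth_walk: "pth G vs es \<Longrightarrow> set vs \<subseteq> verts G \<Longrightarrow> walk G (hd vs) es (last vs)"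
  by (induction G vs es rule: pth.induct) (auto intro: walk.intros)

lemma pth_drop: "pth G vs es \<Longrightarrow> k < length vs \<Longrightarrow> pth G (drop k vs) (drop k es)"
  by (auto simp: pth_iff)

lemma walk_path: "walk G u es v \<Longrightarrow> \<exists>vs es'. pth G vs es' \<and> distinct vs \<and> hd vs = u \<and> last vs = v \<and> set es' \<subseteq> set es"
proof (induction rule: walk.induct)
  case (walk_nil u) then show ?case by (intro exI[of _ "[u]"] exI[of _ "[]"]) auto
next
  case (walk_cons e u x es w)
  then obtain vs es' where P: "pth G vs es'" "distinct vs" "hd vs = x" "last vs = w" "set es' \<subseteq> set es" by auto
  show ?case
  proof (cases "u \<in> set vs")
    case False
    then show ?thesis using walk_cons P
      by (intro exI[of _ "u # vs"] exI[of _ "e # es'"]) (cases vs; auto)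
  next
    case True
    then obtain k where k: "k < length vs" "vs ! k = u" by (auto simp: in_set_conv_nth)
    have "pth G (drop k vs) (drop k es')" using pth_drop P k by auto
    moreover have "hd (drop k vs) = u" using k by (simp add: hd_drop_conv_nth)
    moreover have "last (drop k vs) = w" using k P by simp
    moreover have "set (drop k es') \<subseteq> set (e # es)" using P set_drop_subset by fastforce
    ultimately show ?thesis using P by (intro exI[of _ "drop k vs"] exI[of _ "drop k es'"]) auto
  qed
qed

lemma is_cycle_pth: "is_cycle G es \<longleftrightarrow> es \<noteq> [] \<and> distinct es \<and> (\<exists>vs. pth G vs es \<and> hd vs = last vs \<and> distinct (tl vs))"
  unfolding is_cycle_def pth_iff by auto

lemma cycle_close: "pth G vs es \<Longrightarrow> distinct vs \<Longrightarrow> es \<noteq> [] \<Longrightarrow> e \<notin> set es \<Longrightarrow> e \<in> edges G \<Longrightarrow>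
   ends G e = {last vs, hd vs} \<Longrightarrow> is_cycle G (es @ [e])"
proof -
  assume a: "pth G vs es" "distinct vs" "es \<noteq> []" "e \<notin> set es" "e \<in> edges G" "ends G e = {last vs, hd vs}"
  have p2: "pth G [last vs, hd vs] [e]" using a by simp
  have "pth G (vs @ tl [last vs, hd vs]) (es @ [e])" by (rule pth_append[OF a(1) p2]) simp
  then have "pth G (vs @ [hd vs]) (es @ [e])" by simp
  moreover have "vs \<noteq> []" using a pth_ne by auto
  moreover have "distinct (tl (vs @ [hd vs]))" using a \<open>vs \<noteq> []\<close> by (cases vs) auto
  moreover have "distinct (es @ [e])" using a pth_distinct by auto
  ultimately show ?thesis unfolding is_cycle_pth by (intro conjI exI[of _ "vs @ [hd vs]"]) auto
qed

lemma cycle_open: "is_cycle G C \<Longrightarrow> e \<in> set C \<Longrightarrow> card (ends G e) = 2 \<Longrightarrow>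
  \<exists>vs es. pth G vs es \<and> distinct vs \<and> set es = set C - {e} \<and> ends G e = {hd vs, last vs}"
proof -
  assume c: "is_cycle G C" "e \<in> set C" "card (ends G e) = 2"
  then obtain vs where vs: "pth G vs C" "hd vs = last vs" "distinct (tl vs)" "distinct C" "C \<noteq> []"
    unfolding is_cycle_pth by auto
  obtain v0 ys where ys: "vs = v0 # ys" using vs pth_ne by (cases vs) auto
  obtain pre post where C: "C = pre @ [e] @ post" using c split_list by fastforce
  define k where "k = length pre"
  have sp: "pth G (take (Suc k) vs) pre" "pth G (drop k vs) ([e] @ post)"
    using pth_split[of G vs pre "[e] @ post"] vs C k_def by auto
  have lenys: "length ys = length C" using pth_len[OF vs(1)] ys by auto
  then have kl: "k < length ys" using C k_def by simp
  have "k < length C" "C ! k = e" using C k_def by (auto simp: nth_append)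
  then have ev: "ends G e = {vs ! k, vs ! Suc k}" using vs(1) unfolding pth_iff by metis
  have dk: "drop k vs = vs ! k # drop (Suc k) vs" using kl ys Cons_nth_drop_Suc[of k vs] by auto
  have p_post: "pth G (drop k ys) post" using sp(2) dk ys
    by (cases "drop (Suc k) vs") (auto simp: drop_Suc)
  have p_pre: "pth G (v0 # take k ys) pre" using sp(1) ys by simp
  have lastys: "last ys = v0" using vs ys lenys \<open>C \<noteq> []\<close> by (cases ys) auto
  have "last (drop k ys) = v0" using kl lastys by simp
  then have P: "pth G (drop k ys @ take k ys) (post @ pre)"
    using pth_append[OF p_post p_pre] by simp
  have D: "distinct (drop k ys @ take k ys)" using vs(3) ys
    by (metis append_take_drop_id distinct_append list.sel(3) inf_commute)
  have hd: "hd (drop k ys @ take k ys) = ys ! k" using kl by (simp add: hd_drop_conv_nth)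
  have last: "last (drop k ys @ take k ys) = vs ! k"
  proof (cases k)
    case 0 then show ?thesis using lastys ys by simp
  next
    case (Suc j)
    then have "take k ys \<noteq> []" using kl by auto
    then have "last (drop k ys @ take k ys) = last (take k ys)" by simp
    also have "\<dots> = ys ! j" using Suc kl \<open>take k ys \<noteq> []\<close> by (simp add: last_conv_nth)
    finally show ?thesis using ys Suc by simp
  qed
  have "ends G e = {hd (drop k ys @ take k ys), last (drop k ys @ take k ys)}"
    using ev hd last ys by auto
  moreover have "set (post @ pre) = set C - {e}" using C vs(4) by auto
  ultimately show ?thesis using P D by blast
qed

lemma cycle_mono: "is_cycle G C \<Longrightarrow> (\<forall>e\<in>set C. e \<in> edges H \<and> ends H e = ends G e) \<Longrightarrow> is_cycle H C"
  unfolding is_cycle_pth using pth_mono by metis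

lemma cycle_edges: "is_cycle G C \<Longrightarrow> set C \<subseteq> edges G"
  unfolding is_cycle_pth using pth_edges by metis

lemma distinct_hd_last: "distinct vs \<Longrightarrow> length vs \<ge> 2 \<Longrightarrow> hd vs \<noteq> last vs"
proof (cases vs)
  case (Cons v ws)
  assume "distinct vs" "length vs \<ge> 2"
  then have "ws \<noteq> []" "v \<notin> set ws" using Cons by auto
  then show ?thesis using Cons by auto
qed simp

lemma pth_hd_verts: "pth G vs es \<Longrightarrow> es \<noteq> [] \<Longrightarrow> wf_graph G \<Longrightarrow> hd vs \<in> verts G"
proof (cases es)
  case (Cons e es')
  assume a: "pth G vs es" "wf_graph G"
  then obtain u x ws where "vs = u # x # ws" "e \<in> edges G" "ends G e = {u, x}"
    using pth_Cons_E Cons by metis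
  then show ?thesis using a unfolding wf_graph_def by auto
qed simp

lemma pth_del: "pth (del_edges G F) vs es \<Longrightarrow> pth G vs es \<and> set es \<inter> F = {}"
proof -
  assume p: "pth (del_edges G F) vs es"
  then have "set es \<subseteq> edges G - F" using pth_edges by fastforce
  then show ?thesis using pth_mono[OF p, of G] by auto
qed

lemma dbl_mem: "{h, l} = {p, q} \<Longrightarrow> (p = h \<or> p = l) \<and> (q = h \<or> q = l)" by auto
lemma dbl_mem2: "{h, l} = {p, q} \<Longrightarrow> (h = p \<or> h = q) \<and> (l = p \<or> l = q)" by auto

lemma disj_ne: "z \<in> X \<Longrightarrow> q \<in> Y \<Longrightarrow> X \<inter> Y = {} \<Longrightarrow> z \<noteq> q" by auto
lemma disj_notin: "q \<in> Y \<Longrightarrow> X \<inter> Y = {} \<Longrightarrow> q \<notin> X" by auto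
lemma disj_notin2: "q \<in> X \<Longrightarrow> X \<inter> Y = {} \<Longrightarrow> q \<notin> Y" by auto



lemma first_hit: "walk G u es v \<Longrightarrow> wf_graph G \<Longrightarrow> f \<in> set es \<Longrightarrow>
  \<exists>r1 r2 z z'. es = r1 @ f # r2 \<and> f \<notin> set r1 \<and> walk G u r1 z \<and> ends G f = {z, z'} \<and> walk G z' r2 v"
proof (induction rule: walk.induct)
  case (walk_nil u) then show ?case by simp
next
  case (walk_cons e u x es w)
  show ?case
  proof (cases "e = f")
    case True
    have "u \<in> verts G" using walk_cons by (auto simp: wf_graph_def)
    then show ?thesis using walk_cons True by (intro exI[of _ "[]"] exI[of _ es] exI[of _ u] exI[of _ x]) (auto intro: walk.intros)
  next
    case False
    then obtain r1 r2 z z' where "es = r1 @ f # r2" "f \<notin> set r1" "walk G x r1 z" "ends G f = {z, z'}" "walk G z' r2 w"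
      using walk_cons by auto
    then show ?thesis using walk_cons False by (intro exI[of _ "e # r1"] exI[of _ r2] exI[of _ z] exI[of _ z']) (auto intro: walk.intros)
  qed
qed

lemma ends_pair: "wf_graph G \<Longrightarrow> e \<in> edges G \<Longrightarrow> u \<in> ends G e \<Longrightarrow> \<exists>w. ends G e = {u, w}"
proof -
  assume a: "wf_graph G" "e \<in> edges G" "u \<in> ends G e"
  then have fin: "finite (ends G e)" "card (ends G e) \<le> 2"
    by (auto simp: wf_graph_def intro: finite_subset)
  show ?thesis
  proof (cases "ends G e = {u}")
    case False
    then obtain w where w: "w \<in> ends G e" "w \<noteq> u" using a by auto
    then have "{u, w} \<subseteq> ends G e" using a by auto
    moreover have "card {u, w} = 2" using w by auto
    ultimately have "{u, w} = ends G e" using fin by (metis card_seteq)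
    then show ?thesis by auto
  qed auto
qed

lemma endpts:
  assumes wf: "wf_graph G" and conn: "connected G" and g: "g \<in> edges G"
    and nf: "\<not> edge_cut G {g}"
    and u0: "u0 \<in> verts G" and A: "A = {v \<in> verts G. reachable (del_edges G {f, g}) u0 v}"
    and w: "w \<in> verts G - A"
  shows "\<exists>x y. ends G f = {x, y} \<and> x \<in> A \<and> y \<in> verts G - A \<and> reachable (del_edges G {f, g}) w y"
proof -
  let ?H = "del_edges G {g}"
  let ?F = "del_edges G {f, g}"
  have wfH: "wf_graph ?H" "wf_graph ?F" using wf wf_del by auto
  have "reachable G u0 w" using conn u0 w unfolding connected_def by auto
  then have "reachable ?H u0 w" using nf g u0 w unfolding edge_cut_def by auto
  then obtain es where es: "walk ?H u0 es w" unfolding reachable_def by auto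
  have F: "?F = del_edges ?H {f}" by (simp add: del_del insert_commute)
  have fin: "f \<in> set es"
  proof (rule ccontr)
    assume "f \<notin> set es"
    then have "walk ?F u0 es w" using es F walk_del[of ?H "{f}"] by auto
    then show False using w A unfolding reachable_def by auto
  qed
  obtain r1 r2 z z' where h1: "es = r1 @ f # r2" "f \<notin> set r1" "walk ?H u0 r1 z" "ends ?H f = {z, z'}"
    using first_hit[OF es wfH(1) fin] by blast
  have "walk ?F u0 r1 z" using h1 F walk_del[of ?H "{f}"] by auto
  then have zA: "z \<in> A" using A walk_last_verts unfolding reachable_def by fastforce
  have res: "walk ?H w (rev es) u0" using walk_rev[OF wfH(1) es] .
  obtain q1 q2 z2 z2' where h2: "rev es = q1 @ f # q2" "f \<notin> set q1" "walk ?H w q1 z2" "ends ?H f = {z2, z2'}"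
    using first_hit[OF res wfH(1)] fin by (metis set_rev)
  have wq: "walk ?F w q1 z2" using h2 F walk_del[of ?H "{f}"] by auto
  then have rz2: "reachable ?F w z2" unfolding reachable_def by auto
  have z2V: "z2 \<in> verts G" using wq walk_last_verts by fastforce
  have z2A: "z2 \<notin> A"
  proof
    assume "z2 \<in> A"
    then have "reachable ?F u0 z2" using A by auto
    then have "reachable ?F u0 w" using rz2 reach_sym[OF wfH(2)] reach_trans by metis
    then show False using w A by auto
  qed
  have "ends G f = {z, z2}" using h1(4) h2(4) zA z2A by auto
  then show ?thesis using zA z2A z2V rz2 by blast
qed

lemma struct:
  assumes wf: "wf_graph G" and conn: "connected G"
    and cut: "two_edge_cut G {e1, e2}" and comp: "A \<in> components (del_edges G {e1, e2})"
  shows "\<exists>x1 y1 x2 y2. e1 \<noteq> e2 \<and> e1 \<in> edges G \<and> e2 \<in> edges G \<and> A \<subseteq> verts G \<and>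
   (\<forall>u\<in>A. \<forall>v\<in>A. reachable (del_edges G {e1, e2}) u v) \<and>
   (\<forall>u\<in>verts G - A. \<forall>v\<in>verts G - A. reachable (del_edges G {e1, e2}) u v) \<and>
   (\<forall>e\<in>edges G - {e1, e2}. \<forall>u\<in>ends G e. u \<in> A \<longrightarrow> ends G e \<subseteq> A) \<and>
   ends G e1 = {x1, y1} \<and> ends G e2 = {x2, y2} \<and> x1 \<in> A \<and> x2 \<in> A \<and> y1 \<in> verts G - A \<and> y2 \<in> verts G - A"
proof -
  let ?F = "del_edges G {e1, e2}"
  have wfF: "wf_graph ?F" using wf by (rule wf_del)
  have cc: "card {e1, e2} = 2 \<and> edge_cut G {e1, e2} \<and> (\<forall>F'\<subset>{e1, e2}. \<not> edge_cut G F')"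
    using cut unfolding two_edge_cut_def .
  have c2: "card {e1, e2} = 2" and ec: "edge_cut G {e1, e2}" and mn: "\<forall>F'\<subset>{e1, e2}. \<not> edge_cut G F'"
    using cc by simp_all
  have ne: "e1 \<noteq> e2" using c2 by (cases "e1 = e2") auto
  have inE: "e1 \<in> edges G" "e2 \<in> edges G" using ec unfolding edge_cut_def by blast+
  have "{e1} \<subset> {e1, e2}" "{e2} \<subset> {e1, e2}" using ne by auto
  then have nc1: "\<not> edge_cut G {e1}" and nc2: "\<not> edge_cut G {e2}" using mn by simp_all
  obtain u0 where u0: "u0 \<in> verts G" and A: "A = {v \<in> verts G. reachable ?F u0 v}"
  proof -
    from comp obtain u where "A = {v \<in> verts ?F. reachable ?F u v}" "u \<in> verts ?F"
      unfolding components_def by blast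
    then show ?thesis using that by simp
  qed
  have AV: "A \<subseteq> verts G" using A by auto
  have Aconn: "\<forall>u\<in>A. \<forall>v\<in>A. reachable ?F u v"
  proof (intro ballI)
    fix u v assume "u \<in> A" "v \<in> A"
    then have h: "reachable ?F u0 u" "reachable ?F u0 v" using A by auto
    show "reachable ?F u v" using reach_trans[OF reach_sym[OF wfF h(1)] h(2)] .
  qed
  have Acl: "\<forall>e\<in>edges G - {e1, e2}. \<forall>u\<in>ends G e. u \<in> A \<longrightarrow> ends G e \<subseteq> A"
  proof (intro ballI impI subsetI)
    fix e u v assume e: "e \<in> edges G - {e1, e2}" and u: "u \<in> ends G e" "u \<in> A" and v: "v \<in> ends G e"
    obtain w where w: "ends G e = {u, w}" using ends_pair[OF wf _ u(1)] e by auto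
    have "ends G e \<subseteq> verts G" using wf e unfolding wf_graph_def by blast
    then have "w \<in> verts G" using w by auto
    then have "reachable ?F u w" using reach_edge[of e ?F u w] e w by simp
    moreover have "reachable ?F u0 u" using u A by simp
    ultimately have "reachable ?F u0 w" using reach_trans by metis
    then have "w \<in> A" using A \<open>w \<in> verts G\<close> by blast
    then show "v \<in> A" using v w u by auto
  qed
  obtain p q where pq: "p \<in> verts G" "q \<in> verts G" "\<not> reachable ?F p q"
    using ec unfolding edge_cut_def by blast
  obtain w where w: "w \<in> verts G - A"
  proof -
    have "\<not> (p \<in> A \<and> q \<in> A)" using pq Aconn by auto
    then show ?thesis using pq that by auto
  qed
  have A2: "A = {v \<in> verts G. reachable (del_edges G {e2, e1}) u0 v}" using A by (simp add: insert_commute)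
  obtain x1 y1 where xy1: "ends G e1 = {x1, y1}" "x1 \<in> A" "y1 \<in> verts G - A"
    using endpts[OF wf conn inE(2) nc2 u0 A w] by blast
  obtain x2 y2 where xy2: "ends G e2 = {x2, y2}" "x2 \<in> A" "y2 \<in> verts G - A"
    using endpts[OF wf conn inE(1) nc1 u0 A2 w] by blast
  have toy2: "reachable ?F w' y2" if w': "w' \<in> verts G - A" for w'
  proof -
    obtain x y where "ends G e2 = {x, y}" "x \<in> A" "y \<in> verts G - A" "reachable (del_edges G {e2, e1}) w' y"
      using endpts[OF wf conn inE(1) nc1 u0 A2 w'] by blast
    moreover then have "y = y2" using xy2 by auto
    ultimately show ?thesis by (simp add: insert_commute)
  qed
  have Bconn: "\<forall>u\<in>verts G - A. \<forall>v\<in>verts G - A. reachable ?F u v"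
  proof (intro ballI)
    fix u v assume "u \<in> verts G - A" "v \<in> verts G - A"
    then have h: "reachable ?F u y2" "reachable ?F v y2" using toy2 by auto
    show "reachable ?F u v" using reach_trans[OF h(1) reach_sym[OF wfF h(2)]] .
  qed
  show ?thesis using ne inE AV Aconn Bconn Acl xy1 xy2
    apply -
    apply (rule exI[of _ x1], rule exI[of _ y1], rule exI[of _ x2], rule exI[of _ y2])
    apply (intro conjI)
    apply assumption+
    done
qed



definition allreach :: "('v, 'e) mgraph \<Rightarrow> bool" where
  "allreach H \<longleftrightarrow> (\<forall>u\<in>verts H. \<forall>v\<in>verts H. reachable H u v)"

lemma two_cut_iff:
  assumes wf: "wf_graph H" and conn: "connected H" and bl: "bridgeless H"
    and f: "f \<in> edges H" and g: "g \<in> edges H" and fg: "f \<noteq> g"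
  shows "two_edge_cut H {f, g} \<longleftrightarrow> \<not> allreach (del_edges H {f, g})"
proof -
  have c: "card {f, g} = 2" using fg by simp
  have mn: "\<forall>F'\<subset>{f, g}. \<not> edge_cut H F'"
  proof (intro allI impI)
    fix F' assume F': "F' \<subset> {f, g}"
    then have "F' = {} \<or> F' = {f} \<or> F' = {g}" by auto
    moreover have "\<not> edge_cut H {}" unfolding edge_cut_def del_empty by auto
    moreover have "\<not> edge_cut H {f}" "\<not> edge_cut H {g}" using bl f g unfolding bridgeless_def by auto
    ultimately show "\<not> edge_cut H F'" by auto
  qed
  have "edge_cut H {f, g} \<longleftrightarrow> \<not> allreach (del_edges H {f, g})"
    using conn f g unfolding edge_cut_def allreach_def connected_def by auto
  then show ?thesis using c mn unfolding two_edge_cut_def by auto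
qed

lemma lambda_transfer:
  assumes L: "lambda_ge H k u v"
    and W: "\<And>P. walk H u P v \<Longrightarrow> \<exists>P'. walk H' u P' v \<and> set P' \<subseteq> \<beta> (set P)"
    and D: "\<And>X Y. X \<inter> Y = {} \<Longrightarrow> \<beta> X \<inter> \<beta> Y = {}"
  shows "lambda_ge H' k u v"
proof -
  obtain Ps where Ps: "length Ps = k" "\<forall>P\<in>set Ps. walk H u P v"
    "\<forall>i<k. \<forall>j<k. i \<noteq> j \<longrightarrow> set (Ps ! i) \<inter> set (Ps ! j) = {}"
    using L unfolding lambda_ge_def by auto
  have "\<forall>P\<in>set Ps. \<exists>P'. walk H' u P' v \<and> set P' \<subseteq> \<beta> (set P)" using Ps W by auto
  then obtain h where h: "\<forall>P\<in>set Ps. walk H' u (h P) v \<and> set (h P) \<subseteq> \<beta> (set P)"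
    by metis
  have "\<forall>i<k. \<forall>j<k. i \<noteq> j \<longrightarrow> set (map h Ps ! i) \<inter> set (map h Ps ! j) = {}"
  proof (intro allI impI)
    fix i j assume ij: "i < k" "j < k" "i \<noteq> j"
    then have "\<beta> (set (Ps ! i)) \<inter> \<beta> (set (Ps ! j)) = {}" using Ps D by auto
    moreover have "set (h (Ps ! i)) \<subseteq> \<beta> (set (Ps ! i))" "set (h (Ps ! j)) \<subseteq> \<beta> (set (Ps ! j))"
      using h ij Ps(1) by auto
    ultimately show "set (map h Ps ! i) \<inter> set (map h Ps ! j) = {}" using ij Ps(1) by auto
  qed
  then show ?thesis unfolding lambda_ge_def using Ps h
    by (intro exI[of _ "map h Ps"]) auto
qed

locale red =
  fixes G :: "('v, 'e) mgraph" and T :: "('n, 'f) mgraph" and \<phi> :: "'v \<Rightarrow> 'n" and \<psi> :: "'e \<Rightarrow> 'f"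
    and e1 e2 e1' :: 'e and a' :: 'f and A :: "'v set" and x1 y1 x2 y2 :: 'v
  assumes wf: "wf_graph G" and conn: "connected G" and bl: "bridgeless G"
    and rep: "cactus_rep_2cuts G T \<phi> \<psi>" and cut: "two_edge_cut G {e1, e2}"
    and fr1: "e1' \<notin> edges G" and fr2: "a' \<notin> edges T"
    and ne: "e1 \<noteq> e2" and inE1: "e1 \<in> edges G" and inE2: "e2 \<in> edges G" and AV: "A \<subseteq> verts G"
    and Aconn: "\<And>u v. u \<in> A \<Longrightarrow> v \<in> A \<Longrightarrow> reachable (del_edges G {e1, e2}) u v"
    and Bconn: "\<And>u v. u \<in> verts G - A \<Longrightarrow> v \<in> verts G - A \<Longrightarrow> reachable (del_edges G {e1, e2}) u v"
    and Acl: "\<And>e u. e \<in> edges G \<Longrightarrow> e \<notin> {e1, e2} \<Longrightarrow> u \<in> ends G e \<Longrightarrow> u \<in> A \<Longrightarrow> ends G e \<subseteq> A"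
    and en1: "ends G e1 = {x1, y1}" and en2: "ends G e2 = {x2, y2}"
    and x1A: "x1 \<in> A" and x2A: "x2 \<in> A" and y1B: "y1 \<in> verts G - A" and y2B: "y2 \<in> verts G - A"
begin

abbreviation "BB \<equiv> verts G - A"
abbreviation "FF \<equiv> {e1, e2}"
abbreviation "GF \<equiv> del_edges G {e1, e2}"
abbreviation "G1 \<equiv> reduce G e1 e2 A e1'"
abbreviation "EA \<equiv> {e \<in> edges G - {e1, e2}. ends G e \<subseteq> A}"
abbreviation "EB \<equiv> {e \<in> edges G - {e1, e2}. ends G e \<subseteq> verts G - A}"

lemma wfF: "wf_graph GF" using wf by (rule wf_del)

lemma ends_ne: "e \<in> edges G \<Longrightarrow> ends G e \<noteq> {}" using wf unfolding wf_graph_def by blast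
lemma ends_V: "e \<in> edges G \<Longrightarrow> ends G e \<subseteq> verts G" using wf unfolding wf_graph_def by blast

lemma Bcl: "e \<in> edges G \<Longrightarrow> e \<notin> FF \<Longrightarrow> u \<in> ends G e \<Longrightarrow> u \<in> BB \<Longrightarrow> ends G e \<subseteq> BB"
proof
  fix w assume a: "e \<in> edges G" "e \<notin> FF" "u \<in> ends G e" "u \<in> BB" "w \<in> ends G e"
  show "w \<in> BB"
  proof (rule ccontr)
    assume "w \<notin> BB"
    then have "w \<in> A" using a ends_V by auto
    then have "ends G e \<subseteq> A" using Acl a by blast
    then show False using a by auto
  qed
qed

lemma edge_side: "e \<in> edges G \<Longrightarrow> e \<notin> FF \<Longrightarrow> ends G e \<subseteq> A \<or> ends G e \<subseteq> BB"
proof -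
  assume e: "e \<in> edges G" "e \<notin> FF"
  obtain u where u: "u \<in> ends G e" using ends_ne e by auto
  show ?thesis
  proof (cases "u \<in> A")
    case True then show ?thesis using Acl e u by blast
  next
    case False then have "u \<in> BB" using u ends_V e by auto
    then show ?thesis using Bcl e u by blast
  qed
qed

lemma EA_EB: "EA \<inter> EB = {}"
  using ends_ne by fastforce

lemma walk_stay_A: "walk G u es v \<Longrightarrow> set es \<inter> FF = {} \<Longrightarrow> u \<in> A \<Longrightarrow> v \<in> A \<and> set es \<subseteq> EA"
proof (induction rule: walk.induct)
  case (walk_cons e u x es w)
  then have "ends G e \<subseteq> A" using Acl[of e u] by auto
  then show ?case using walk_cons by auto
qed auto

lemma walk_stay_B: "walk G u es v \<Longrightarrow> set es \<inter> FF = {} \<Longrightarrow> u \<in> BB \<Longrightarrow> v \<in> BB \<and> set es \<subseteq> EB"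
proof (induction rule: walk.induct)
  case (walk_cons e u x es w)
  then have "ends G e \<subseteq> BB" using Bcl[of e u] by auto
  then show ?case using walk_cons by auto
qed auto

lemma y12_walk: "\<exists>W. walk G y1 W y2 \<and> set W \<subseteq> EB"
proof -
  obtain W where "walk GF y1 W y2" using Bconn[OF y1B y2B] unfolding reachable_def by auto
  then have "walk G y1 W y2" "set W \<inter> FF = {}" by (metis walk_del)+
  then show ?thesis using walk_stay_B y1B by blast
qed

lemma B_walk: "w \<in> BB \<Longrightarrow> y \<in> BB \<Longrightarrow> \<exists>W. walk G y W w \<and> set W \<subseteq> EB"
proof -
  assume a: "w \<in> BB" "y \<in> BB"
  obtain W where "walk GF y W w" using Bconn[OF a(2) a(1)] unfolding reachable_def by auto
  then have "walk G y W w" "set W \<inter> FF = {}" by (metis walk_del)+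
  then show ?thesis using walk_stay_B a by blast
qed

lemma A_walk: "w \<in> A \<Longrightarrow> y \<in> A \<Longrightarrow> \<exists>W. walk G y W w \<and> set W \<subseteq> EA"
proof -
  assume a: "w \<in> A" "y \<in> A"
  obtain W where "walk GF y W w" using Aconn[OF a(2) a(1)] unfolding reachable_def by auto
  then have "walk G y W w" "set W \<inter> FF = {}" by (metis walk_del)+
  then show ?thesis using walk_stay_A a by blast
qed

lemma cross_walk: "walk G u es v \<Longrightarrow> u \<in> BB \<Longrightarrow> v \<in> A \<Longrightarrow>
  (\<exists>r1 r2. es = r1 @ e1 # r2 \<and> walk G x1 r2 v) \<or> (\<exists>r1 r2. es = r1 @ e2 # r2 \<and> walk G x2 r2 v)"
proof (induction rule: walk.induct)
  case (walk_nil u) then show ?case by auto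
next
  case (walk_cons e u x es w)
  show ?case
  proof (cases "e \<in> FF")
    case True
    then show ?thesis
    proof
      assume e: "e = e1"
      then have "u = y1" "x = x1" using walk_cons en1 x1A by (auto simp: doubleton_eq_iff)
      then show ?thesis using walk_cons e by (intro disjI1 exI[of _ "[]"] exI[of _ es]) auto
    next
      assume e: "e \<in> {e2}"
      then have "u = y2" "x = x2" using walk_cons en2 x2A by (auto simp: doubleton_eq_iff)
      then show ?thesis using walk_cons e by (intro disjI2 exI[of _ "[]"] exI[of _ es]) auto
    qed
  next
    case False
    then have "ends G e \<subseteq> BB" using Bcl[of e u] walk_cons by auto
    then have "x \<in> BB" using walk_cons by auto
    then have "(\<exists>r1 r2. es = r1 @ e1 # r2 \<and> walk G x1 r2 w) \<or> (\<exists>r1 r2. es = r1 @ e2 # r2 \<and> walk G x2 r2 w)"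
      using walk_cons by auto
    then show ?thesis by (metis append_Cons)
  qed
qed

lemma G1_verts[simp]: "verts G1 = A" by (simp add: reduce_def)
lemma G1_edges: "edges G1 = EA \<union> {e1'}" by (simp add: reduce_def)
lemma G1_ends: "e \<noteq> e1' \<Longrightarrow> ends G1 e = ends G e" by (simp add: reduce_def)
lemma G1_ends': "ends G1 e1' = {x1, x2}"
  using en1 en2 x1A x2A y1B y2B by (auto simp: reduce_def)
lemma e1'_EA: "e1' \<notin> EA" using fr1 by auto

lemma wfG1: "wf_graph G1"
proof -
  have "finite A" using wf AV unfolding wf_graph_def by (auto intro: finite_subset)
  moreover have "finite (edges G1)" using wf unfolding G1_edges wf_graph_def by auto
  moreover have "\<forall>e\<in>edges G1. ends G1 e \<subseteq> verts G1 \<and> ends G1 e \<noteq> {} \<and> card (ends G1 e) \<le> 2"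
  proof
    fix e assume e: "e \<in> edges G1"
    show "ends G1 e \<subseteq> verts G1 \<and> ends G1 e \<noteq> {} \<and> card (ends G1 e) \<le> 2"
    proof (cases "e = e1'")
      case True then show ?thesis using G1_ends' x1A x2A by (simp add: card_insert_le_m1)
    next
      case False then show ?thesis using e G1_ends[OF False] wf unfolding G1_edges wf_graph_def by auto
    qed
  qed
  ultimately show ?thesis unfolding wf_graph_def by simp
qed

lemma EA_G1: "e \<in> EA \<Longrightarrow> e \<in> edges G1 \<and> ends G1 e = ends G e"
proof -
  assume e: "e \<in> EA"
  then have "e \<noteq> e1'" using e1'_EA by blast
  then show ?thesis using e G1_ends[of e] unfolding G1_edges by blast
qed

lemma project: "walk G u es v \<Longrightarrow> u \<in> A \<Longrightarrow> v \<in> A \<Longrightarrow>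
  \<exists>es'. walk G1 u es' v \<and> set es' \<subseteq> (set es \<inter> EA) \<union> (if e1 \<in> set es \<and> e2 \<in> set es then {e1'} else {})"
proof (induction "length es" arbitrary: u es rule: less_induct)
  case less
  show ?case
  proof (cases es)
    case Nil
    then have "u = v" using less.prems by (auto elim: walk.cases)
    then show ?thesis using less.prems Nil by (intro exI[of _ "[]"]) (auto intro: walk.intros)
  next
    case (Cons e rest)
    then obtain x where e: "e \<in> edges G" "ends G e = {u, x}" and wr: "walk G x rest v"
      using less.prems by (auto elim: walk.cases)
    show ?thesis
    proof (cases "e \<in> FF")
      case False
      then have eA: "ends G e \<subseteq> A" using Acl[of e u] e less.prems by auto
      then have xA: "x \<in> A" using e by auto
      have "length rest < length es" using Cons by simp
      then obtain es' where es': "walk G1 x es' v"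
        "set es' \<subseteq> (set rest \<inter> EA) \<union> (if e1 \<in> set rest \<and> e2 \<in> set rest then {e1'} else {})"
        using less.hyps[of rest x] wr xA less.prems by blast
      have "e \<in> EA" using e eA False by auto
      then have "walk G1 u (e # es') v" using EA_G1 e es' by (auto intro: walk.intros)
      moreover have "set (e # es') \<subseteq> (set es \<inter> EA) \<union> (if e1 \<in> set es \<and> e2 \<in> set es then {e1'} else {})"
        using es'(2) Cons \<open>e \<in> EA\<close> by (auto split: if_splits)
      ultimately show ?thesis by blast
    next
      case True
      have key: "\<exists>es'. walk G1 xi es' v \<and> set es' \<subseteq> (set es \<inter> EA) \<union> (if e1 \<in> set es \<and> e2 \<in> set es then {e1'} else {})"
        if xi: "(xi = x1 \<and> e = e1) \<or> (xi = x2 \<and> e = e2)" and xB: "x \<in> BB" for xi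
      proof -
        have "(\<exists>r1 r2. rest = r1 @ e1 # r2 \<and> walk G x1 r2 v) \<or> (\<exists>r1 r2. rest = r1 @ e2 # r2 \<and> walk G x2 r2 v)"
          using cross_walk[OF wr xB less.prems(3)] .
        then obtain r1 r2 ej xj where sp: "rest = r1 @ ej # r2" "walk G xj r2 v"
          and ej: "(ej = e1 \<and> xj = x1) \<or> (ej = e2 \<and> xj = x2)" by blast
        have xjA: "xj \<in> A" using ej x1A x2A by auto
        have "length r2 < length es" using Cons sp by simp
        then obtain es' where es': "walk G1 xj es' v"
          "set es' \<subseteq> (set r2 \<inter> EA) \<union> (if e1 \<in> set r2 \<and> e2 \<in> set r2 then {e1'} else {})"
          using less.hyps[of r2 xj] sp xjA less.prems by blast
        have sub: "set r2 \<subseteq> set es" using Cons sp by auto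
        show ?thesis
        proof (cases "xi = xj")
          case True
          then show ?thesis using es' sub by (intro exI[of _ es']) (auto split: if_splits)
        next
          case False
          then have both: "e1 \<in> set es \<and> e2 \<in> set es" using xi ej Cons sp by auto
          have "ends G1 e1' = {xi, xj}" using G1_ends' xi ej False by auto
          then have "walk G1 xi (e1' # es') xj \<or> True" by simp
          have "walk G1 xi (e1' # es') v"
            using \<open>ends G1 e1' = {xi, xj}\<close> es'(1) G1_edges by (auto intro: walk.intros)
          moreover have "set (e1' # es') \<subseteq> (set es \<inter> EA) \<union> (if e1 \<in> set es \<and> e2 \<in> set es then {e1'} else {})"
            using es'(2) sub both by (auto split: if_splits)
          ultimately show ?thesis by blast
        qed
      qed
      show ?thesis
      proof (cases "e = e1")
        case True
        then have "u = x1" "x = y1" using e en1 less.prems(2) y1B by (auto simp: doubleton_eq_iff)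
        then show ?thesis using key[of x1] True y1B by auto
      next
        case False
        then have "e = e2" using \<open>e \<in> FF\<close> by auto
        then have "u = x2" "x = y2" using e en2 less.prems(2) y2B by (auto simp: doubleton_eq_iff)
        then show ?thesis using key[of x2] \<open>e = e2\<close> y2B by auto
      qed
    qed
  qed
qed

lemma x12_walk: "\<exists>M. walk G x1 M x2 \<and> set M \<subseteq> FF \<union> EB"
proof -
  obtain W where W: "walk G y1 W y2" "set W \<subseteq> EB" using y12_walk by auto
  have "x2 \<in> verts G" using x2A AV by auto
  then have "walk G y2 [e2] x2" using inE2 en2 by (auto intro: walk.intros simp: insert_commute)
  then have "walk G y1 (W @ [e2]) x2" using W walk_append by metis
  then have "walk G x1 (e1 # W @ [e2]) x2" using inE1 en1 by (auto intro: walk.intros)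
  then show ?thesis using W by (intro exI[of _ "e1 # W @ [e2]"]) auto
qed

lemma lift: "walk G1 u es v \<Longrightarrow>
  \<exists>es'. walk G u es' v \<and> set es' \<subseteq> (set es \<inter> EA) \<union> (if e1' \<in> set es then FF \<union> EB else {})"
proof (induction rule: walk.induct)
  case (walk_nil u)
  then show ?case using AV by (intro exI[of _ "[]"]) (auto intro: walk.intros)
next
  case (walk_cons e u x es w)
  then obtain es' where es': "walk G x es' w" "set es' \<subseteq> (set es \<inter> EA) \<union> (if e1' \<in> set es then FF \<union> EB else {})"
    by auto
  show ?case
  proof (cases "e = e1'")
    case False
    then have eA: "e \<in> EA" using walk_cons G1_edges by auto
    then have "walk G u (e # es') w" using walk_cons es' G1_ends[OF False] by (auto intro: walk.intros)
    then show ?thesis using es' eA by (intro exI[of _ "e # es'"]) (auto split: if_splits)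
  next
    case True
    then have ux: "{u, x} = {x1, x2}" using walk_cons G1_ends' by auto
    obtain M where M: "walk G x1 M x2" "set M \<subseteq> FF \<union> EB" using x12_walk by auto
    have "\<exists>M'. walk G u M' x \<and> set M' \<subseteq> FF \<union> EB"
    proof (cases "u = x1 \<and> x = x2")
      case True then show ?thesis using M by auto
    next
      case False
      then have "u = x2" "x = x1" using ux by (auto simp: doubleton_eq_iff)
      then show ?thesis using M walk_rev[OF wf M(1)] by (intro exI[of _ "rev M"]) auto
    qed
    then obtain M' where M': "walk G u M' x" "set M' \<subseteq> FF \<union> EB" by auto
    then have "walk G u (M' @ es') w" using es' walk_append by metis
    then show ?thesis using M' es' True by (intro exI[of _ "M' @ es'"]) (auto split: if_splits)
  qed
qed

lemma allreach_from: "wf_graph H \<Longrightarrow> x \<in> verts H \<Longrightarrow> (\<And>w. w \<in> verts H \<Longrightarrow> reachable H x w) \<Longrightarrow> allreach H"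
  unfolding allreach_def using reach_sym reach_trans by metis

lemma xB_walk: "(xi = x1 \<and> ei = e1) \<or> (xi = x2 \<and> ei = e2) \<Longrightarrow> w \<in> BB \<Longrightarrow> \<exists>M. walk G xi M w \<and> set M \<subseteq> {ei} \<union> EB"
proof -
  assume a: "(xi = x1 \<and> ei = e1) \<or> (xi = x2 \<and> ei = e2)" "w \<in> BB"
  then obtain yi where yi: "yi \<in> BB" "ends G ei = {xi, yi}" "ei \<in> edges G"
    using en1 en2 y1B y2B inE1 inE2 by blast
  obtain W where W: "walk G yi W w" "set W \<subseteq> EB" using B_walk[OF a(2) yi(1)] by auto
  have "walk G xi (ei # W) w" using W yi by (auto intro: walk.intros)
  then show ?thesis using W by (intro exI[of _ "ei # W"]) auto
qed

lemma G1_conn: "connected G1"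
  unfolding connected_def
proof (intro conjI ballI)
  show "verts G1 \<noteq> {}" using x1A by auto
next
  fix u v assume "u \<in> verts G1" "v \<in> verts G1"
  then have uv: "u \<in> A" "v \<in> A" by auto
  then obtain W where W: "walk G u W v" "set W \<subseteq> EA" using A_walk by metis
  then have "walk G1 u W v" using walk_mono[OF W(1), of G1] EA_G1 uv by auto
  then show "reachable G1 u v" unfolding reachable_def by auto
qed

lemma G1_bl: "bridgeless G1"
  unfolding bridgeless_def
proof
  fix h assume h: "h \<in> edges G1"
  have "reachable (del_edges G1 {h}) u v" if uv: "u \<in> A" "v \<in> A" for u v
  proof (cases "h = e1'")
    case True
    obtain W where W: "walk G u W v" "set W \<subseteq> EA" using A_walk uv by metis
    then have "walk G1 u W v" using walk_mono[OF W(1), of G1] EA_G1 uv by auto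
    moreover have "set W \<inter> {h} = {}" using W True e1'_EA by auto
    ultimately show ?thesis unfolding reachable_def walk_del by auto
  next
    case False
    then have hA: "h \<in> EA" using h G1_edges by auto
    have "reachable G u v" using conn uv AV unfolding connected_def by auto
    moreover have "\<not> edge_cut G {h}" using bl hA unfolding bridgeless_def by auto
    ultimately have "reachable (del_edges G {h}) u v" using uv AV hA unfolding edge_cut_def by auto
    then obtain es where es: "walk G u es v" "set es \<inter> {h} = {}" unfolding reachable_def walk_del by auto
    obtain es' where es': "walk G1 u es' v" "set es' \<subseteq> (set es \<inter> EA) \<union> (if e1 \<in> set es \<and> e2 \<in> set es then {e1'} else {})"
      using project[OF es(1) uv] by blast
    have "set es' \<inter> {h} = {}" using es' es False by (auto split: if_splits)
    then show ?thesis using es' unfolding reachable_def walk_del by auto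
  qed
  then show "\<not> edge_cut G1 {h}" unfolding edge_cut_def by auto
qed

lemma cut_equiv1:
  assumes f: "f \<in> EA" and g: "g \<in> EA"
  shows "allreach (del_edges G1 {f, g}) \<longleftrightarrow> allreach (del_edges G {f, g})"
proof
  assume R: "allreach (del_edges G {f, g})"
  show "allreach (del_edges G1 {f, g})" unfolding allreach_def
  proof (intro ballI)
    fix u v assume "u \<in> verts (del_edges G1 {f, g})" "v \<in> verts (del_edges G1 {f, g})"
    then have uv: "u \<in> A" "v \<in> A" by auto
    then have "reachable (del_edges G {f, g}) u v" using R AV unfolding allreach_def by auto
    then obtain es where es: "walk G u es v" "set es \<inter> {f, g} = {}" unfolding reachable_def walk_del by auto
    obtain es' where es': "walk G1 u es' v" "set es' \<subseteq> (set es \<inter> EA) \<union> (if e1 \<in> set es \<and> e2 \<in> set es then {e1'} else {})"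
      using project[OF es(1) uv] by blast
    have "set es' \<inter> {f, g} = {}" using es' es f g e1'_EA by (auto split: if_splits)
    then show "reachable (del_edges G1 {f, g}) u v" using es' unfolding reachable_def walk_del by auto
  qed
next
  assume R: "allreach (del_edges G1 {f, g})"
  show "allreach (del_edges G {f, g})"
  proof (rule allreach_from[OF wf_del[OF wf], of x1])
    show "x1 \<in> verts (del_edges G {f, g})" using x1A AV by auto
  next
    fix w assume w: "w \<in> verts (del_edges G {f, g})"
    show "reachable (del_edges G {f, g}) x1 w"
    proof (cases "w \<in> A")
      case True
      then have "reachable (del_edges G1 {f, g}) x1 w" using R x1A unfolding allreach_def by auto
      then obtain es where es: "walk G1 x1 es w" "set es \<inter> {f, g} = {}" unfolding reachable_def walk_del by auto
      obtain es' where es': "walk G x1 es' w" "set es' \<subseteq> (set es \<inter> EA) \<union> (if e1' \<in> set es then FF \<union> EB else {})"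
        using lift[OF es(1)] by blast
      have "set es' \<inter> {f, g} = {}" using es' es f g EA_EB by (auto split: if_splits)
      then show ?thesis using es' unfolding reachable_def walk_del by auto
    next
      case False
      then obtain M where M: "walk G x1 M w" "set M \<subseteq> {e1} \<union> EB" using xB_walk[of x1 e1 w] w by auto
      have "set M \<inter> {f, g} = {}" using M f g EA_EB by auto
      then show ?thesis using M unfolding reachable_def walk_del by auto
    qed
  qed
qed

lemma cut_equiv2:
  assumes g: "g \<in> EA"
  shows "allreach (del_edges G1 {e1', g}) \<longleftrightarrow> allreach (del_edges G {e1, g})"
proof
  assume R: "allreach (del_edges G {e1, g})"
  show "allreach (del_edges G1 {e1', g})" unfolding allreach_def
  proof (intro ballI)
    fix u v assume "u \<in> verts (del_edges G1 {e1', g})" "v \<in> verts (del_edges G1 {e1', g})"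
    then have uv: "u \<in> A" "v \<in> A" by auto
    then have "reachable (del_edges G {e1, g}) u v" using R AV unfolding allreach_def by auto
    then obtain es where es: "walk G u es v" "set es \<inter> {e1, g} = {}" unfolding reachable_def walk_del by auto
    obtain es' where es': "walk G1 u es' v" "set es' \<subseteq> (set es \<inter> EA) \<union> (if e1 \<in> set es \<and> e2 \<in> set es then {e1'} else {})"
      using project[OF es(1) uv] by blast
    have "set es' \<inter> {e1', g} = {}" using es' es g e1'_EA by (auto split: if_splits)
    then show "reachable (del_edges G1 {e1', g}) u v" using es' unfolding reachable_def walk_del by auto
  qed
next
  assume R: "allreach (del_edges G1 {e1', g})"
  show "allreach (del_edges G {e1, g})"
  proof (rule allreach_from[OF wf_del[OF wf], of x2])
    show "x2 \<in> verts (del_edges G {e1, g})" using x2A AV by auto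
  next
    fix w assume w: "w \<in> verts (del_edges G {e1, g})"
    show "reachable (del_edges G {e1, g}) x2 w"
    proof (cases "w \<in> A")
      case True
      then have "reachable (del_edges G1 {e1', g}) x2 w" using R x2A unfolding allreach_def by auto
      then obtain es where es: "walk G1 x2 es w" "set es \<inter> {e1', g} = {}" unfolding reachable_def walk_del by auto
      obtain es' where es': "walk G x2 es' w" "set es' \<subseteq> (set es \<inter> EA) \<union> (if e1' \<in> set es then FF \<union> EB else {})"
        using lift[OF es(1)] by blast
      have "set es' \<inter> {e1, g} = {}" using es' es g by (auto split: if_splits)
      then show ?thesis using es' unfolding reachable_def walk_del by auto
    next
      case False
      then obtain M where M: "walk G x2 M w" "set M \<subseteq> {e2} \<union> EB" using xB_walk[of x2 e2 w] w by auto
      have "set M \<inter> {e1, g} = {}" using M g ne EA_EB by auto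
      then show ?thesis using M unfolding reachable_def walk_del by auto
    qed
  qed
qed

lemma lambda_equiv: "u \<in> A \<Longrightarrow> v \<in> A \<Longrightarrow> lambda_ge G k u v \<longleftrightarrow> lambda_ge G1 k u v"
proof
  assume uv: "u \<in> A" "v \<in> A" and L: "lambda_ge G k u v"
  show "lambda_ge G1 k u v"
  proof (rule lambda_transfer[OF L, where \<beta> = "\<lambda>X. (X \<inter> EA) \<union> (if e1 \<in> X \<and> e2 \<in> X then {e1'} else {})"])
    fix P assume "walk G u P v"
    then show "\<exists>P'. walk G1 u P' v \<and> set P' \<subseteq> (set P \<inter> EA) \<union> (if e1 \<in> set P \<and> e2 \<in> set P then {e1'} else {})"
      using project uv by blast
  next
    fix X Y :: "'e set" assume "X \<inter> Y = {}"
    then show "((X \<inter> EA) \<union> (if e1 \<in> X \<and> e2 \<in> X then {e1'} else {})) \<inter> ((Y \<inter> EA) \<union> (if e1 \<in> Y \<and> e2 \<in> Y then {e1'} else {})) = {}"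
      using e1'_EA by (auto split: if_splits)
  qed
next
  assume uv: "u \<in> A" "v \<in> A" and L: "lambda_ge G1 k u v"
  show "lambda_ge G k u v"
  proof (rule lambda_transfer[OF L, where \<beta> = "\<lambda>X. (X \<inter> EA) \<union> (if e1' \<in> X then FF \<union> EB else {})"])
    fix P assume "walk G1 u P v"
    then show "\<exists>P'. walk G u P' v \<and> set P' \<subseteq> (set P \<inter> EA) \<union> (if e1' \<in> set P then FF \<union> EB else {})"
      using lift by blast
  next
    fix X Y :: "'e set" assume "X \<inter> Y = {}"
    then show "((X \<inter> EA) \<union> (if e1' \<in> X then FF \<union> EB else {})) \<inter> ((Y \<inter> EA) \<union> (if e1' \<in> Y then FF \<union> EB else {})) = {}"
      using EA_EB by (auto split: if_splits)
  qed
qed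

end


context red begin

lemma repD: "cactus T \<and> \<phi> ` verts G = verts T \<and>
     (\<forall>u \<in> verts G. \<forall>v \<in> verts G. \<phi> u = \<phi> v \<longleftrightarrow> lambda_ge G 3 u v) \<and>
     bij_betw \<psi> (external_edges G \<phi>) (edges T) \<and>
     (\<forall>e \<in> external_edges G \<phi>. ends T (\<psi> e) = \<phi> ` ends G e) \<and>
     (\<forall>e1 \<in> external_edges G \<phi>. \<forall>e2 \<in> external_edges G \<phi>. e1 \<noteq> e2 \<longrightarrow>
        (two_edge_cut G {e1, e2} \<longleftrightarrow> on_common_cycle T (\<psi> e1) (\<psi> e2)))"
  using rep unfolding cactus_rep_2cuts_def .
lemma cacT: "cactus T" using repD by (rule conjunct1)
lemma phiV: "\<phi> ` verts G = verts T" using repD[THEN conjunct2] by (rule conjunct1)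
lemma lam: "u \<in> verts G \<Longrightarrow> v \<in> verts G \<Longrightarrow> \<phi> u = \<phi> v \<longleftrightarrow> lambda_ge G 3 u v"
  using repD[THEN conjunct2, THEN conjunct2, THEN conjunct1] by (elim ballE) auto
lemma bij: "bij_betw \<psi> (external_edges G \<phi>) (edges T)"
  using repD[THEN conjunct2, THEN conjunct2, THEN conjunct2] by (rule conjunct1)
lemma endsT: "e \<in> external_edges G \<phi> \<Longrightarrow> ends T (\<psi> e) = \<phi> ` ends G e"
  using repD[THEN conjunct2, THEN conjunct2, THEN conjunct2, THEN conjunct2, THEN conjunct1] by (elim ballE) auto
lemma cyc: "e \<in> external_edges G \<phi> \<Longrightarrow> e' \<in> external_edges G \<phi> \<Longrightarrow> e \<noteq> e' \<Longrightarrow>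
   two_edge_cut G {e, e'} \<longleftrightarrow> on_common_cycle T (\<psi> e) (\<psi> e')"
  using repD[THEN conjunct2, THEN conjunct2, THEN conjunct2, THEN conjunct2, THEN conjunct2] by (elim ballE) auto
lemma wfT: "wf_graph T" using cacT unfolding cactus_def by blast
lemma Tcard: "t \<in> edges T \<Longrightarrow> card (ends T t) = 2" using cacT unfolding cactus_def by blast
lemma Tcyc: "is_cycle T C1 \<Longrightarrow> is_cycle T C2 \<Longrightarrow> e \<in> set C1 \<Longrightarrow> e \<in> set C2 \<Longrightarrow> set C1 = set C2"
  using cacT unfolding cactus_def by blast

abbreviation "aT \<equiv> \<psi> e1"
abbreviation "bT \<equiv> \<psi> e2"
abbreviation "TA \<equiv> \<phi> ` A"
abbreviation "TB \<equiv> \<phi> ` (verts G - A)"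
abbreviation "p1 \<equiv> \<phi> x1"
abbreviation "p2 \<equiv> \<phi> x2"
abbreviation "q1 \<equiv> \<phi> y1"
abbreviation "q2 \<equiv> \<phi> y2"
abbreviation "SS \<equiv> side_of T {\<psi> e1, \<psi> e2} (\<phi> ` A)"
abbreviation "T1 \<equiv> reduce_noloop T (\<psi> e1) (\<psi> e2) (side_of T {\<psi> e1, \<psi> e2} (\<phi> ` A)) a'"
abbreviation "ET \<equiv> {t \<in> edges T - {\<psi> e1, \<psi> e2}. ends T t \<subseteq> \<phi> ` A}"
abbreviation "TF \<equiv> del_edges T {\<psi> e1, \<psi> e2}"

lemma phi_AB: "s \<in> A \<Longrightarrow> p \<in> BB \<Longrightarrow> \<phi> s \<noteq> \<phi> p"
proof
  assume sp: "s \<in> A" "p \<in> BB" "\<phi> s = \<phi> p"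
  then have "lambda_ge G 3 s p" using lam AV by auto
  then obtain Ps where Ps: "length Ps = 3" "\<forall>P\<in>set Ps. walk G s P p"
    "\<forall>i<3. \<forall>j<3. i \<noteq> j \<longrightarrow> set (Ps ! i) \<inter> set (Ps ! j) = {}"
    unfolding lambda_ge_def by blast
  have hit: "e1 \<in> set (Ps ! i) \<or> e2 \<in> set (Ps ! i)" if i: "i < 3" for i
  proof (rule ccontr)
    assume "\<not> ?thesis"
    then have "set (Ps ! i) \<inter> FF = {}" by auto
    moreover have "walk G s (Ps ! i) p" using Ps i by auto
    ultimately have "p \<in> A" using walk_stay_A sp by blast
    then show False using sp by auto
  qed
  have d01: "set (Ps ! 0) \<inter> set (Ps ! 1) = {}" and d02: "set (Ps ! 0) \<inter> set (Ps ! 2) = {}"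
    and d12: "set (Ps ! 1) \<inter> set (Ps ! 2) = {}" using Ps(3) by auto
  have h0: "e1 \<in> set (Ps ! 0) \<or> e2 \<in> set (Ps ! 0)" and h1: "e1 \<in> set (Ps ! 1) \<or> e2 \<in> set (Ps ! 1)"
    and h2: "e1 \<in> set (Ps ! 2) \<or> e2 \<in> set (Ps ! 2)" using hit by auto
  show False using h0 h1 h2 d01 d02 d12 by blast
qed

lemma TA_TB: "TA \<inter> TB = {}" using phi_AB by blast
lemma VT: "verts T = TA \<union> TB"
proof -
  have "verts G = A \<union> BB" using AV by auto
  then show ?thesis using phiV by (metis image_Un)
qed

lemma e1ext: "e1 \<in> external_edges G \<phi>"
  using phi_AB[OF x1A y1B] en1 inE1 unfolding external_edges_def by auto
lemma e2ext: "e2 \<in> external_edges G \<phi>"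
  using phi_AB[OF x2A y2B] en2 inE2 unfolding external_edges_def by auto
lemma enT1: "ends T aT = {p1, q1}" using endsT[OF e1ext] en1 by auto
lemma enT2: "ends T bT = {p2, q2}" using endsT[OF e2ext] en2 by auto
lemma ab_ne: "aT \<noteq> bT" using bij e1ext e2ext ne unfolding bij_betw_def inj_on_def by blast
lemma abE: "aT \<in> edges T" "bT \<in> edges T" using bij e1ext e2ext unfolding bij_betw_def by auto
lemma p1A: "p1 \<in> TA" and p2A: "p2 \<in> TA" and q1B: "q1 \<in> TB" and q2B: "q2 \<in> TB"
  using x1A x2A y1B y2B by auto

lemma tpre: "t \<in> edges T \<Longrightarrow> \<exists>e\<in>external_edges G \<phi>. t = \<psi> e"
  using bij unfolding bij_betw_def by auto

lemma tside: "t \<in> edges T \<Longrightarrow> t \<notin> {aT, bT} \<Longrightarrow> ends T t \<subseteq> TA \<or> ends T t \<subseteq> TB"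
proof -
  assume t: "t \<in> edges T" "t \<notin> {aT, bT}"
  then obtain e where e: "e \<in> external_edges G \<phi>" "t = \<psi> e" using tpre by blast
  then have "e \<notin> FF" using t by auto
  moreover have "e \<in> edges G" using e unfolding external_edges_def by auto
  ultimately have "ends G e \<subseteq> A \<or> ends G e \<subseteq> BB" using edge_side by blast
  then show ?thesis using endsT[OF e(1)] e by auto
qed

lemma map_walk: "walk G u es v \<Longrightarrow> set es \<inter> FF = {} \<Longrightarrow> reachable TF (\<phi> u) (\<phi> v)"
proof (induction rule: walk.induct)
  case (walk_nil u)
  then have "\<phi> u \<in> verts TF" using phiV by auto
  then show ?case by (rule reach_refl)
next
  case (walk_cons e u x es w)
  then have IH: "reachable TF (\<phi> x) (\<phi> w)" by auto
  show ?case
  proof (cases "\<phi> u = \<phi> x")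
    case True then show ?thesis using IH by simp
  next
    case False
    then have ext: "e \<in> external_edges G \<phi>" using walk_cons unfolding external_edges_def by auto
    then have "\<psi> e \<in> edges T" using bij unfolding bij_betw_def by auto
    moreover have "\<psi> e \<notin> {aT, bT}"
      using bij ext e1ext e2ext walk_cons unfolding bij_betw_def inj_on_def by auto
    moreover have "ends T (\<psi> e) = {\<phi> u, \<phi> x}" using endsT[OF ext] walk_cons by auto
    moreover have "x \<in> verts G" using ends_V[of e] walk_cons by auto
    then have "\<phi> x \<in> verts T" using phiV by auto
    ultimately have "reachable TF (\<phi> u) (\<phi> x)" by (intro reach_edge[of "\<psi> e"]) auto
    then show ?thesis using IH reach_trans by metis
  qed
qed

lemma walkT_side: "walk TF s es t \<Longrightarrow> s \<in> TA \<Longrightarrow> t \<in> TA \<and> (\<forall>e\<in>set es. ends T e \<subseteq> TA)"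
proof (induction rule: walk.induct)
  case (walk_cons e u x es w)
  have "ends T e \<subseteq> TA \<or> ends T e \<subseteq> TB" apply (rule tside) using walk_cons by auto
  moreover have "u \<in> ends T e" using walk_cons by auto
  ultimately have "ends T e \<subseteq> TA" using walk_cons TA_TB by blast
  then show ?case using walk_cons by auto
qed auto

lemma SS_eq: "SS = TA"
proof
  show "SS \<subseteq> TA"
  proof
    fix t assume "t \<in> SS"
    then obtain s where "s \<in> TA" "reachable TF s t" unfolding side_of_def by auto
    then show "t \<in> TA" using walkT_side unfolding reachable_def by blast
  qed
next
  show "TA \<subseteq> SS" unfolding side_of_def
  proof
    fix t assume t: "t \<in> TA"
    then have "t \<in> verts TF" using VT by auto
    then have "reachable TF t t" by (rule reach_refl)
    then show "t \<in> {t \<in> verts T. \<exists>s\<in>TA. reachable TF s t}" using t VT by auto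
  qed
qed

lemma pth_side: "pth T vs es \<Longrightarrow> set es \<inter> {aT, bT} = {} \<Longrightarrow> X = TA \<or> X = TB \<Longrightarrow> hd vs \<in> X \<Longrightarrow> set vs \<subseteq> X"
proof (induction es arbitrary: vs)
  case Nil
  then obtain v where "vs = [v]" using pth_Nil_E by metis
  then show ?case using Nil by auto
next
  case (Cons e es)
  then obtain u x ws where v: "vs = u # x # ws" "e \<in> edges T" "ends T e = {u, x}" "pth T (x # ws) es"
    using pth_Cons_E by metis
  have "ends T e \<subseteq> TA \<or> ends T e \<subseteq> TB" apply (rule tside) using v Cons by auto
  moreover have "u \<in> ends T e" "u \<in> X" using v Cons by auto
  ultimately have "ends T e \<subseteq> X" using Cons.prems(3) TA_TB by blast
  then have "x \<in> X" using v by auto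
  then have "set (x # ws) \<subseteq> X" using Cons.IH[OF v(4)] Cons.prems by auto
  then show ?case using v \<open>u \<in> X\<close> by auto
qed

lemma pth_side2: "pth T vs es \<Longrightarrow> set es \<inter> {aT, bT} = {} \<Longrightarrow> hd vs \<in> verts T \<Longrightarrow> set vs \<subseteq> TA \<or> set vs \<subseteq> TB"
  using pth_side[of vs es TA] pth_side[of vs es TB] VT by auto

end


context red begin

lemma ab_S: "(ends T aT \<union> ends T bT) \<inter> TA = {p1, p2}"
  using enT1 enT2 p1A p2A q1B q2B TA_TB by auto

lemma card12: "card {p1, p2} = 1 \<longleftrightarrow> p1 = p2" by (cases "p1 = p2") auto

lemma T1_eq: "T1 = (if p1 = p2 then \<lparr>verts = TA, edges = ET, ends = ends T\<rparr>
    else \<lparr>verts = TA, edges = ET \<union> {a'}, ends = (ends T)(a' := {p1, p2})\<rparr>)"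
  unfolding reduce_noloop_def reduce_def SS_eq ab_S card12 by simp

lemma T1_verts[simp]: "verts T1 = TA" by (simp add: T1_eq)
lemma T1_edges: "edges T1 = ET \<union> (if p1 = p2 then {} else {a'})" by (simp add: T1_eq)
lemma T1_ends: "t \<noteq> a' \<Longrightarrow> ends T1 t = ends T t" by (simp add: T1_eq)
lemma T1_ends': "p1 \<noteq> p2 \<Longrightarrow> ends T1 a' = {p1, p2}" by (simp add: T1_eq)
lemma a'_ET: "a' \<notin> ET" using fr2 by auto
lemma ET_T1: "t \<in> ET \<Longrightarrow> t \<in> edges T1 \<and> ends T1 t = ends T t"
proof -
  assume t: "t \<in> ET"
  then have "t \<noteq> a'" using a'_ET by blast
  then show ?thesis using t T1_ends[of t] unfolding T1_edges by blast
qed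
lemma a'_T1: "a' \<in> edges T1 \<longleftrightarrow> p1 \<noteq> p2" using a'_ET unfolding T1_edges by auto
lemma T1_sub: "t \<in> edges T1 \<Longrightarrow> t \<noteq> a' \<Longrightarrow> t \<in> ET" unfolding T1_edges by (auto split: if_splits)

lemma ET_ends_ne: "t \<in> ET \<Longrightarrow> ends T t \<noteq> {}" using wfT unfolding wf_graph_def by blast

lemma wfT1: "wf_graph T1"
proof -
  have "finite TA" using wfT VT unfolding wf_graph_def by (auto intro: finite_subset)
  moreover have "finite (edges T1)" using wfT unfolding T1_edges wf_graph_def by auto
  moreover have "\<forall>e\<in>edges T1. ends T1 e \<subseteq> verts T1 \<and> ends T1 e \<noteq> {} \<and> card (ends T1 e) \<le> 2"
  proof
    fix e assume e: "e \<in> edges T1"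
    show "ends T1 e \<subseteq> verts T1 \<and> ends T1 e \<noteq> {} \<and> card (ends T1 e) \<le> 2"
    proof (cases "e = a'")
      case True then have "p1 \<noteq> p2" using e a'_T1 by auto
      then show ?thesis using T1_ends' True p1A p2A by simp
    next
      case False
      then have "e \<in> ET" using T1_sub e by auto
      then show ?thesis using ET_T1 wfT unfolding wf_graph_def by auto
    qed
  qed
  ultimately show ?thesis unfolding wf_graph_def by simp
qed

lemma T1_card: "t \<in> edges T1 \<Longrightarrow> card (ends T1 t) = 2"
proof (cases "t = a'")
  case True
  assume "t \<in> edges T1"
  then have "p1 \<noteq> p2" using True a'_T1 by simp
  then show ?thesis using True T1_ends'[OF \<open>p1 \<noteq> p2\<close>] by simp
next
  case False
  assume "t \<in> edges T1"
  then have "t \<in> ET" using False T1_sub by simp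
  then have "ends T1 t = ends T t" "t \<in> edges T" using ET_T1 by auto
  then show ?thesis using Tcard by simp
qed

lemma TB_conn: "u \<in> TB \<Longrightarrow> v \<in> TB \<Longrightarrow> reachable TF u v"
proof -
  assume "u \<in> TB" "v \<in> TB"
  then obtain s s' where s: "s \<in> BB" "s' \<in> BB" "u = \<phi> s" "v = \<phi> s'" by auto
  obtain W where W: "walk G s W s'" "set W \<subseteq> EB" using B_walk[OF s(2) s(1)] by auto
  have "set W \<inter> FF = {}" using W by auto
  then show ?thesis using map_walk[OF W(1)] s by simp
qed

lemma TA_conn: "u \<in> TA \<Longrightarrow> v \<in> TA \<Longrightarrow> reachable TF u v"
proof -
  assume "u \<in> TA" "v \<in> TA"
  then obtain s s' where s: "s \<in> A" "s' \<in> A" "u = \<phi> s" "v = \<phi> s'" by auto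
  obtain W where W: "walk G s W s'" "set W \<subseteq> EA" using A_walk[OF s(2) s(1)] by auto
  have "set W \<inter> FF = {}" using W by auto
  then show ?thesis using map_walk[OF W(1)] s by simp
qed

lemma T1_conn: "connected T1"
  unfolding connected_def
proof (intro conjI ballI)
  show "verts T1 \<noteq> {}" using p1A by auto
next
  fix u v assume "u \<in> verts T1" "v \<in> verts T1"
  then have uv: "u \<in> TA" "v \<in> TA" by auto
  then obtain W where W: "walk TF u W v" using TA_conn unfolding reachable_def by blast
  then have W': "walk T u W v" "set W \<inter> {aT, bT} = {}" using walk_del by metis+
  have "\<forall>e\<in>set W. ends T e \<subseteq> TA" using walkT_side[OF W uv(1)] by auto
  moreover have "set W \<subseteq> edges T" using W' walk_pth pth_edges by metis
  ultimately have "\<forall>e\<in>set W. e \<in> ET" using W' by auto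
  then have "walk T1 u W v" using walk_mono[OF W'(1), of T1] ET_T1 uv by auto
  then show "reachable T1 u v" unfolding reachable_def by auto
qed

lemma T_a: "is_cycle T1 C \<Longrightarrow> a' \<notin> set C \<Longrightarrow> is_cycle T C"
proof -
  assume c: "is_cycle T1 C" "a' \<notin> set C"
  have "\<forall>e\<in>set C. e \<in> ET" using cycle_edges[OF c(1)] c(2) T1_sub by auto
  then show ?thesis using cycle_mono[OF c(1), of T] ET_T1 by auto
qed

lemma notin_TBseg: "pth T vs es \<Longrightarrow> set vs \<subseteq> TB \<Longrightarrow> t \<in> ET \<Longrightarrow> t \<notin> set es"
proof
  assume a: "pth T vs es" "set vs \<subseteq> TB" "t \<in> ET" "t \<in> set es"
  then have "ends T t \<subseteq> TB" using pth_ends by fastforce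
  moreover have "ends T t \<subseteq> TA" "ends T t \<noteq> {}" using a ET_ends_ne by auto
  ultimately show False using TA_TB by blast
qed

lemma T_b: "is_cycle T C \<Longrightarrow> set C \<inter> {aT, bT} = {} \<Longrightarrow> \<alpha> \<in> set C \<Longrightarrow> \<alpha> \<in> ET \<Longrightarrow> is_cycle T1 C"
proof -
  assume c: "is_cycle T C" "set C \<inter> {aT, bT} = {}" "\<alpha> \<in> set C" "\<alpha> \<in> ET"
  then obtain vs where vs: "pth T vs C" "C \<noteq> []" unfolding is_cycle_pth by auto
  have "hd vs \<in> verts T" using pth_hd_verts[OF vs(1) vs(2) wfT] .
  then have side: "set vs \<subseteq> TA \<or> set vs \<subseteq> TB" using pth_side2 vs c by auto
  have "\<not> set vs \<subseteq> TB" using notin_TBseg[OF vs(1) _ c(4)] c(3) by auto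
  then have vA: "set vs \<subseteq> TA" using side by auto
  have "\<forall>e\<in>set C. e \<in> ET"
  proof
    fix e assume e: "e \<in> set C"
    then have "ends T e \<subseteq> TA" using pth_ends[OF vs(1) e] vA by auto
    then show "e \<in> ET" using e c(2) pth_edges[OF vs(1)] by auto
  qed
  then show ?thesis using cycle_mono[OF c(1), of T1] ET_T1 by auto
qed

end


context red begin

lemma pqV: "p1 \<in> verts T" "p2 \<in> verts T" "q1 \<in> verts T" "q2 \<in> verts T"
  using phiV x1A x2A y1B y2B AV by auto

lemma closeA: "pth T vs es \<Longrightarrow> distinct vs \<Longrightarrow> set vs \<subseteq> TA \<Longrightarrow> set es \<inter> {aT, bT} = {} \<Longrightarrow> es \<noteq> [] \<Longrightarrow>
  {hd vs, last vs} = {p1, p2} \<Longrightarrow> p1 \<noteq> p2 \<and> is_cycle T1 (es @ [a'])"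
proof -
  assume a: "pth T vs es" "distinct vs" "set vs \<subseteq> TA" "set es \<inter> {aT, bT} = {}" "es \<noteq> []"
    "{hd vs, last vs} = {p1, p2}"
  have "length vs \<ge> 2" using pth_len[OF a(1)] a(5) by (cases es) auto
  then have hl: "hd vs \<noteq> last vs" using distinct_hd_last a(2) by blast
  have pp: "p1 \<noteq> p2"
  proof
    assume "p1 = p2"
    then have "{hd vs, last vs} = {p1}" using a(6) by simp
    then show False using hl by (metis doubleton_eq_iff insert_absorb2)
  qed
  have esET: "\<forall>e\<in>set es. e \<in> ET"
  proof
    fix e assume e: "e \<in> set es"
    then have "ends T e \<subseteq> TA" using pth_ends[OF a(1) e] a(3) by auto
    moreover have "e \<in> edges T" using pth_edges[OF a(1)] e by auto
    ultimately show "e \<in> ET" using a(4) e by auto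
  qed
  then have p1: "pth T1 vs es" using pth_mono[OF a(1), of T1] ET_T1 by auto
  have "a' \<notin> set es" using esET a'_ET by auto
  moreover have "a' \<in> edges T1" using a'_T1 pp by simp
  moreover have "ends T1 a' = {last vs, hd vs}" using T1_ends'[OF pp] a(6) by (simp add: insert_commute)
  ultimately have "is_cycle T1 (es @ [a'])" using cycle_close[OF p1 a(2) a(5)] by blast
  then show ?thesis using pp by simp
qed

lemma L2:
  assumes C: "is_cycle T C" and aC: "aT \<in> set C" and e0: "e0 \<in> set C" "e0 \<in> ET"
  shows "p1 \<noteq> p2 \<and> (\<exists>C1. is_cycle T1 C1 \<and> a' \<in> set C1 \<and> set C \<inter> ET \<subseteq> set C1)"
proof -
  obtain vs es where o: "pth T vs es" "distinct vs" "set es = set C - {aT}" "ends T aT = {hd vs, last vs}"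
    using cycle_open[OF C aC Tcard[OF abE(1)]] by blast
  have hl: "{hd vs, last vs} = {p1, q1}" using o(4) enT1 by simp
  have pq1: "p1 \<noteq> q1" using phi_AB[OF x1A y1B] .
  have vne: "vs \<noteq> []" using pth_ne[OF o(1)] .
  have dist_es: "distinct es" using pth_distinct[OF o(1) o(2)] .
  have aes: "aT \<notin> set es" using o(3) by auto
  have "hd vs \<in> {p1, q1}" using hl by blast
  then have hdV: "hd vs \<in> verts T" using pqV(1,3) by (metis insertE empty_iff)
  have hlin: "hd vs \<in> set vs" "last vs \<in> set vs" using vne by auto
  have bin: "bT \<in> set es"
  proof (rule ccontr)
    assume "bT \<notin> set es"
    then have "set es \<inter> {aT, bT} = {}" using aes by auto
    then have "set vs \<subseteq> TA \<or> set vs \<subseteq> TB" using pth_side2[OF o(1) _ hdV] by auto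
    moreover have "p1 \<in> set vs" "q1 \<in> set vs" using dbl_mem[OF hl] hlin by metis+
    ultimately show False using p1A q1B TA_TB by auto
  qed
  obtain r1 r2 where es: "es = r1 @ bT # r2" using split_list[OF bin] by blast
  have br: "bT \<notin> set r1" "bT \<notin> set r2" using dist_es es by auto
  have ar: "aT \<notin> set r1" "aT \<notin> set r2" using aes es by auto
  have r1ab: "set r1 \<inter> {aT, bT} = {}" and r2ab: "set r2 \<inter> {aT, bT} = {}" using br ar by auto
  define k where "k = length r1"
  have sp: "pth T (take (Suc k) vs) r1" "pth T (drop k vs) (bT # r2)"
    using pth_split[of T vs r1 "bT # r2"] o(1) es k_def by auto
  obtain z1 z2 ws where z: "drop k vs = z1 # z2 # ws" "ends T bT = {z1, z2}" "pth T (z2 # ws) r2"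
    using pth_Cons_E[OF sp(2)] by blast
  have lenv: "length vs = Suc (length es)" using pth_len[OF o(1)] .
  then have kl: "k < length vs" using es k_def by simp
  have vk: "vs ! k = z1" using z(1) kl by (metis nth_via_drop)
  have tk: "take (Suc k) vs = take k vs @ [z1]" using kl vk by (simp add: take_Suc_conv_app_nth)
  have V1h: "hd (take (Suc k) vs) = hd vs" using vne by (simp add: hd_take)
  have V1l: "last (take (Suc k) vs) = z1" using tk by simp
  have vsplit: "vs = take k vs @ z1 # z2 # ws" using z(1) by (metis append_take_drop_id)
  have V2l: "last (z2 # ws) = last vs" using vsplit by (metis last_ConsR last_appendR list.distinct(1))
  have D1: "distinct (take (Suc k) vs)" using o(2) by simp
  have D2: "distinct (z2 # ws)" using o(2) vsplit by (metis distinct.simps(2) distinct_append)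
  have z12: "{z1, z2} = {p2, q2}" using z(2) enT2 by simp
  have "take (Suc k) vs \<noteq> []" using vne by simp
  then have V1in: "hd (take (Suc k) vs) \<in> set (take (Suc k) vs)" "z1 \<in> set (take (Suc k) vs)"
    using tk hd_in_set by (metis, simp)
  have "z2 \<in> {p2, q2}" using z12 by blast
  then have z2V: "z2 \<in> verts T" using pqV(2,4) by (metis insertE empty_iff)
  have e0n: "e0 \<noteq> aT" "e0 \<noteq> bT" using e0 by auto
  then have e0es: "e0 \<in> set r1 \<or> e0 \<in> set r2" using e0 o(3) es by auto
  have CET: "set C \<inter> ET \<subseteq> set r1 \<union> set r2" using o(3) es by auto
  show ?thesis
  proof (cases "hd vs = p1")
    case True
    then have lq: "last vs = q1" using hl pq1 by (metis doubleton_eq_iff)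
    have V1A: "set (take (Suc k) vs) \<subseteq> TA" using pth_side[OF sp(1) r1ab, of TA] V1h True p1A by auto
    have "set (z2 # ws) \<subseteq> TA \<or> set (z2 # ws) \<subseteq> TB" using pth_side2[OF z(3) r2ab] z2V by auto
    moreover have "q1 \<in> set (z2 # ws)" using V2l lq by (metis last_in_set list.distinct(1))
    ultimately have V2B: "set (z2 # ws) \<subseteq> TB" using disj_notin[OF q1B TA_TB] by blast
    have z1A: "z1 \<in> TA" using V1A V1in by auto
    have "z1 \<noteq> q2" using disj_ne[OF z1A q2B TA_TB] .
    then have "z1 = p2" using dbl_mem2[OF z12] by blast
    have e0r2: "e0 \<notin> set r2" using notin_TBseg[OF z(3) V2B e0(2)] .
    then have "e0 \<in> set r1" using e0es by auto
    then have "r1 \<noteq> []" by auto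
    moreover have "{hd (take (Suc k) vs), last (take (Suc k) vs)} = {p1, p2}" using V1h V1l True \<open>z1 = p2\<close> by simp
    ultimately have res: "p1 \<noteq> p2 \<and> is_cycle T1 (r1 @ [a'])" using closeA[OF sp(1) D1 V1A r1ab] by blast
    have "set C \<inter> ET \<subseteq> set r1" using CET notin_TBseg[OF z(3) V2B] by blast
    then show ?thesis using res by (intro conjI exI[of _ "r1 @ [a']"]) auto
  next
    case False
    then have hq: "hd vs = q1" and lp: "last vs = p1" using hl by (auto simp: doubleton_eq_iff)
    have V1B: "set (take (Suc k) vs) \<subseteq> TB" using pth_side[OF sp(1) r1ab, of TB] V1h hq q1B by auto
    have "set (z2 # ws) \<subseteq> TA \<or> set (z2 # ws) \<subseteq> TB" using pth_side2[OF z(3) r2ab] z2V by auto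
    moreover have "p1 \<in> set (z2 # ws)" using V2l lp by (metis last_in_set list.distinct(1))
    ultimately have V2A: "set (z2 # ws) \<subseteq> TA" using disj_notin2[OF p1A TA_TB] by blast
    have "z2 \<in> TA" using V2A by auto
    then have "z2 \<noteq> q2" using disj_ne[OF _ q2B TA_TB] by blast
    then have "z2 = p2" using dbl_mem2[OF z12] by blast
    have e0r1: "e0 \<notin> set r1" using notin_TBseg[OF sp(1) V1B e0(2)] .
    then have "e0 \<in> set r2" using e0es by auto
    then have "r2 \<noteq> []" by auto
    moreover have "{hd (z2 # ws), last (z2 # ws)} = {p1, p2}" using V2l lp \<open>z2 = p2\<close> by auto
    ultimately have res: "p1 \<noteq> p2 \<and> is_cycle T1 (r2 @ [a'])" using closeA[OF z(3) D2 V2A r2ab] by blast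
    have "set C \<inter> ET \<subseteq> set r2" using CET notin_TBseg[OF sp(1) V1B] by blast
    then show ?thesis using res by (intro conjI exI[of _ "r2 @ [a']"]) auto
  qed
qed

lemma H1:
  assumes c: "ends T c = {pc, qc}" and d: "ends T d = {pd, qd}" and cd: "{c, d} = {aT, bT}"
    and pcA: "pc \<in> TA" and pdA: "pd \<in> TA" and qcB: "qc \<in> TB" and qdB: "qd \<in> TB"
    and P: "pth T vs es" and dv: "distinct vs" and vA: "set vs \<subseteq> TA" and esET: "set es \<subseteq> ET"
    and hv: "hd vs = pc" and lv: "last vs = pd"
  shows "\<exists>C. is_cycle T C \<and> set es \<subseteq> set C \<and> c \<in> set C \<and> d \<in> set C \<and>
     (\<forall>e\<in>set C. e = c \<or> e = d \<or> e \<in> set es \<or> ends T e \<subseteq> TB)"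
proof -
  obtain W where W: "walk TF qd W qc" using TB_conn[OF qdB qcB] unfolding reachable_def by blast
  obtain vsQ esQ where Q: "pth TF vsQ esQ" "distinct vsQ" "hd vsQ = qd" "last vsQ = qc"
    using walk_path[OF W] by blast
  have QT: "pth T vsQ esQ" "set esQ \<inter> {aT, bT} = {}" using pth_del[OF Q(1)] by auto
  have QB: "set vsQ \<subseteq> TB" using pth_side[OF QT(1) QT(2), of TB] Q(3) qdB by auto
  obtain rest where vQ: "vsQ = qd # rest" using Q(3) pth_ne[OF Q(1)] by (cases vsQ) auto
  have cdE: "c \<in> edges T" "d \<in> edges T" "c \<noteq> d" using cd abE ab_ne by (auto simp: doubleton_eq_iff)
  have cdab: "c \<in> {aT, bT}" "d \<in> {aT, bT}" using cd by blast+
  have "pth T (pd # vsQ) (d # esQ)" using vQ QT(1) cdE d by simp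
  then have PP: "pth T (vs @ vsQ) (es @ d # esQ)" using pth_append[OF P] lv by fastforce
  have "set vs \<inter> set vsQ = {}" using vA QB TA_TB by blast
  then have DD: "distinct (vs @ vsQ)" using dv Q(2) by simp
  have vne: "vs \<noteq> []" using pth_ne[OF P] .
  have cnot: "c \<notin> set (es @ d # esQ)"
  proof -
    have "c \<notin> set es" using esET cdab by blast
    moreover have "c \<notin> set esQ" using QT(2) cdab by blast
    ultimately show ?thesis using cdE by simp
  qed
  have "ends T c = {last (vs @ vsQ), hd (vs @ vsQ)}"
    using c vne Q(4) hv vQ by (simp add: insert_commute)
  then have cyc: "is_cycle T ((es @ d # esQ) @ [c])"
    using cycle_close[OF PP DD _ cnot cdE(1)] by simp
  have "\<forall>e\<in>set esQ. ends T e \<subseteq> TB" using pth_ends[OF QT(1)] QB by blast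
  then show ?thesis using cyc by (intro exI[of _ "(es @ d # esQ) @ [c]"]) auto
qed

lemma L1:
  assumes C1: "is_cycle T1 C1" and aC: "a' \<in> set C1"
  shows "\<exists>C. is_cycle T C \<and> set C1 - {a'} \<subseteq> set C \<and> aT \<in> set C \<and>
     (\<forall>e\<in>set C. e = aT \<or> e = bT \<or> e \<in> set C1 \<or> ends T e \<subseteq> TB)"
proof -
  have aE: "a' \<in> edges T1" using cycle_edges[OF C1] aC by auto
  then have pp: "p1 \<noteq> p2" using a'_T1 by simp
  obtain vs es where o: "pth T1 vs es" "distinct vs" "set es = set C1 - {a'}" "ends T1 a' = {hd vs, last vs}"
    using cycle_open[OF C1 aC T1_card[OF aE]] by blast
  have hl: "{hd vs, last vs} = {p1, p2}" using o(4) T1_ends'[OF pp] by simp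
  have esET: "set es \<subseteq> ET"
  proof
    fix e assume e: "e \<in> set es"
    then have "e \<in> edges T1" "e \<noteq> a'" using pth_edges[OF o(1)] o(3) by auto
    then show "e \<in> ET" by (rule T1_sub)
  qed
  have "\<forall>e\<in>set es. e \<in> edges T \<and> ends T e = ends T1 e"
  proof
    fix e assume "e \<in> set es"
    then have "e \<in> ET" using esET by blast
    then show "e \<in> edges T \<and> ends T e = ends T1 e" using ET_T1[of e] by simp
  qed
  then have PT: "pth T vs es" using pth_mono[OF o(1), of T] by blast
  have esab: "set es \<inter> {aT, bT} = {}" using esET by auto
  have "hd vs \<in> TA" using dbl_mem2[OF hl] p1A p2A by metis
  then have vA: "set vs \<subseteq> TA" using pth_side[OF PT esab, of TA] by auto
  show ?thesis
  proof (cases "hd vs = p1")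
    case True
    then have "last vs = p2" using hl pp by (metis doubleton_eq_iff)
    then obtain C where "is_cycle T C" "set es \<subseteq> set C" "aT \<in> set C" "bT \<in> set C"
       "\<forall>e\<in>set C. e = aT \<or> e = bT \<or> e \<in> set es \<or> ends T e \<subseteq> TB"
      using H1[OF enT1 enT2 refl p1A p2A q1B q2B PT o(2) vA esET True] by blast
    then show ?thesis using o(3) by (intro exI[of _ C]) auto
  next
    case False
    then have "hd vs = p2" "last vs = p1" using hl by (auto simp: doubleton_eq_iff)
    then obtain C where "is_cycle T C" "set es \<subseteq> set C" "bT \<in> set C" "aT \<in> set C"
       "\<forall>e\<in>set C. e = bT \<or> e = aT \<or> e \<in> set es \<or> ends T e \<subseteq> TB"
      using H1[OF enT2 enT1 insert_commute p2A p1A q2B q1B PT o(2) vA esET] by blast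
    then show ?thesis using o(3) by (intro exI[of _ C]) auto
  qed
qed

end


context red begin

lemma aT_notT1: "aT \<notin> edges T1"
proof
  assume "aT \<in> edges T1"
  moreover have "aT \<noteq> a'" using abE fr2 by auto
  ultimately have "aT \<in> ET" using T1_sub by blast
  then show False by auto
qed

lemma ET_notTB: "t \<in> ET \<Longrightarrow> \<not> ends T t \<subseteq> TB"
  using ET_ends_ne TA_TB by blast

lemma both_a': "is_cycle T1 C1 \<Longrightarrow> is_cycle T1 C2 \<Longrightarrow> a' \<in> set C1 \<Longrightarrow> a' \<in> set C2 \<Longrightarrow> set C1 \<subseteq> set C2"
proof
  fix x assume c: "is_cycle T1 C1" "is_cycle T1 C2" "a' \<in> set C1" "a' \<in> set C2" and x: "x \<in> set C1"
  obtain C where C: "is_cycle T C" "set C1 - {a'} \<subseteq> set C" "aT \<in> set C"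
    using L1[OF c(1) c(3)] by blast
  obtain C' where C': "is_cycle T C'" "aT \<in> set C'"
     "\<forall>e\<in>set C'. e = aT \<or> e = bT \<or> e \<in> set C2 \<or> ends T e \<subseteq> TB"
    using L1[OF c(2) c(4)] by blast
  have eq: "set C = set C'" using Tcyc[OF C(1) C'(1) C(3) C'(2)] .
  show "x \<in> set C2"
  proof (cases "x = a'")
    case True then show ?thesis using c by simp
  next
    case False
    then have xET: "x \<in> ET" using cycle_edges[OF c(1)] x T1_sub by blast
    have "x \<in> set C'" using C(2) x False eq by blast
    then have "x = aT \<or> x = bT \<or> x \<in> set C2 \<or> ends T x \<subseteq> TB" using C'(3) by blast
    then show ?thesis using xET ET_notTB[OF xET] by auto
  qed
qed

lemma mixed: "is_cycle T1 C1 \<Longrightarrow> is_cycle T1 C2 \<Longrightarrow> a' \<in> set C1 \<Longrightarrow> a' \<notin> set C2 \<Longrightarrow> e \<in> set C1 \<Longrightarrow> e \<in> set C2 \<Longrightarrow> False"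
proof -
  assume c: "is_cycle T1 C1" "is_cycle T1 C2" "a' \<in> set C1" "a' \<notin> set C2" "e \<in> set C1" "e \<in> set C2"
  obtain C where C: "is_cycle T C" "set C1 - {a'} \<subseteq> set C" "aT \<in> set C"
    using L1[OF c(1) c(3)] by blast
  have C2T: "is_cycle T C2" using T_a c by blast
  have "e \<in> set C" using c C(2) by blast
  then have "set C = set C2" using Tcyc[OF C(1) C2T] c by blast
  then have "aT \<in> set C2" using C(3) by simp
  then show False using cycle_edges[OF c(2)] aT_notT1 by blast
qed

lemma cactusT1: "cactus T1"
  unfolding cactus_def
proof (intro conjI allI impI ballI)
  show "wf_graph T1" by (rule wfT1)
  show "connected T1" by (rule T1_conn)
next
  fix e assume "e \<in> edges T1" then show "card (ends T1 e) = 2" by (rule T1_card)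
next
  fix e C1 C2 assume h: "is_cycle T1 C1 \<and> is_cycle T1 C2 \<and> e \<in> set C1 \<and> e \<in> set C2"
  then have c: "is_cycle T1 C1" "is_cycle T1 C2" "e \<in> set C1" "e \<in> set C2" by auto
  show "set C1 = set C2"
  proof (cases "a' \<in> set C1")
    case True
    show ?thesis
    proof (cases "a' \<in> set C2")
      case True
      then show ?thesis using both_a'[OF c(1) c(2)] both_a'[OF c(2) c(1)] \<open>a' \<in> set C1\<close> by blast
    next
      case False then show ?thesis using mixed[OF c(1) c(2) True _ c(3) c(4)] by blast
    qed
  next
    case False
    show ?thesis
    proof (cases "a' \<in> set C2")
      case True then show ?thesis using mixed[OF c(2) c(1) True False c(4) c(3)] by blast
    next
      case False2: False
      show ?thesis using Tcyc[OF T_a[OF c(1) False] T_a[OF c(2) False2] c(3) c(4)] .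
    qed
  qed
qed

lemma C0: "on_common_cycle T aT bT" using cyc[OF e1ext e2ext ne] cut by blast

lemma cyc_equiv:
  assumes al: "\<alpha> \<in> edges T1" and be: "\<beta> \<in> edges T1" and ab: "\<alpha> \<noteq> \<beta>"
  shows "on_common_cycle T1 \<alpha> \<beta> \<longleftrightarrow>
    on_common_cycle T (if \<alpha> = a' then aT else \<alpha>) (if \<beta> = a' then aT else \<beta>)"
proof
  assume "on_common_cycle T1 \<alpha> \<beta>"
  then obtain C1 where C1: "is_cycle T1 C1" "\<alpha> \<in> set C1" "\<beta> \<in> set C1" unfolding on_common_cycle_def by blast
  show "on_common_cycle T (if \<alpha> = a' then aT else \<alpha>) (if \<beta> = a' then aT else \<beta>)"
  proof (cases "a' \<in> set C1")
    case False
    then have "is_cycle T C1" "\<alpha> \<noteq> a'" "\<beta> \<noteq> a'" using T_a C1 by auto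
    then show ?thesis using C1 unfolding on_common_cycle_def by auto
  next
    case True
    obtain C where C: "is_cycle T C" "set C1 - {a'} \<subseteq> set C" "aT \<in> set C"
      using L1[OF C1(1) True] by blast
    have "(if \<alpha> = a' then aT else \<alpha>) \<in> set C" "(if \<beta> = a' then aT else \<beta>) \<in> set C"
      using C C1 by auto
    then show ?thesis using C(1) unfolding on_common_cycle_def by blast
  qed
next
  assume "on_common_cycle T (if \<alpha> = a' then aT else \<alpha>) (if \<beta> = a' then aT else \<beta>)"
  then obtain C where C: "is_cycle T C" "(if \<alpha> = a' then aT else \<alpha>) \<in> set C" "(if \<beta> = a' then aT else \<beta>) \<in> set C"
    unfolding on_common_cycle_def by blast
  show "on_common_cycle T1 \<alpha> \<beta>"
  proof (cases "\<alpha> = a' \<or> \<beta> = a'")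
    case True
    then have one: "(\<alpha> = a' \<and> \<beta> \<noteq> a') \<or> (\<beta> = a' \<and> \<alpha> \<noteq> a')" using ab by auto
    have aC: "aT \<in> set C" using C True by auto
    obtain \<gamma> where g: "\<gamma> \<in> {\<alpha>, \<beta>}" "\<gamma> \<noteq> a'" "\<gamma> \<in> set C" using one C by auto
    have gET: "\<gamma> \<in> ET" using g al be T1_sub by blast
    obtain C1 where C1: "is_cycle T1 C1" "a' \<in> set C1" "set C \<inter> ET \<subseteq> set C1"
      using L2[OF C(1) aC g(3) gET] by blast
    have "\<gamma> \<in> set C1" using C1 g gET by blast
    then have "\<alpha> \<in> set C1" "\<beta> \<in> set C1" using one g C1(2) by auto
    then show ?thesis using C1(1) unfolding on_common_cycle_def by blast
  next
    case False
    then have aET: "\<alpha> \<in> ET" and bET: "\<beta> \<in> ET" using al be T1_sub by blast+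
    have inC: "\<alpha> \<in> set C" "\<beta> \<in> set C" using C False by auto
    show ?thesis
    proof (cases "aT \<in> set C")
      case True
      obtain C1 where C1: "is_cycle T1 C1" "a' \<in> set C1" "set C \<inter> ET \<subseteq> set C1"
        using L2[OF C(1) True inC(1) aET] by blast
      then show ?thesis using inC aET bET unfolding on_common_cycle_def by blast
    next
      case False
      have "bT \<notin> set C"
      proof
        assume bC: "bT \<in> set C"
        obtain C0' where "is_cycle T C0'" "aT \<in> set C0'" "bT \<in> set C0'" using C0 unfolding on_common_cycle_def by blast
        then have "set C0' = set C" using Tcyc C(1) bC by blast
        then show False using False \<open>aT \<in> set C0'\<close> by simp
      qed
      then have "set C \<inter> {aT, bT} = {}" using False by auto
      then have "is_cycle T1 C" using T_b[OF C(1) _ inC(1) aET] by blast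
      then show ?thesis using inC unfolding on_common_cycle_def by blast
    qed
  qed
qed

end


context red begin

abbreviation "XA \<equiv> {e \<in> EA. card (\<phi> ` ends G e) = 2}"

lemma card_pp: "card {p1, p2} = 2 \<longleftrightarrow> p1 \<noteq> p2" by (cases "p1 = p2") auto

lemma extG1: "external_edges G1 \<phi> = XA \<union> (if p1 = p2 then {} else {e1'})"
proof -
  have "e \<in> external_edges G1 \<phi> \<longleftrightarrow> e \<in> XA \<union> (if p1 = p2 then {} else {e1'})" for e
  proof (cases "e = e1'")
    case True
    have "\<phi> ` ends G1 e1' = {p1, p2}" using G1_ends' by simp
    then show ?thesis using True e1'_EA card_pp unfolding external_edges_def G1_edges by auto
  next
    case False
    then show ?thesis unfolding external_edges_def G1_edges using G1_ends[OF False] by auto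
  qed
  then show ?thesis by blast
qed

lemma XA_ext: "XA \<subseteq> external_edges G \<phi>" unfolding external_edges_def by auto

lemma psi_XA: "bij_betw \<psi> XA ET"
proof -
  have inj: "inj_on \<psi> (external_edges G \<phi>)" using bij unfolding bij_betw_def by blast
  have im: "\<psi> ` external_edges G \<phi> = edges T" using bij unfolding bij_betw_def by blast
  have "\<psi> ` XA = ET"
  proof
    show "\<psi> ` XA \<subseteq> ET"
    proof
      fix t assume "t \<in> \<psi> ` XA"
      then obtain e where e: "e \<in> XA" "t = \<psi> e" by blast
      have eext: "e \<in> external_edges G \<phi>" using e XA_ext by blast
      have "t \<in> edges T" using im eext e by blast
      moreover have "t \<noteq> aT" "t \<noteq> bT" using inj eext e1ext e2ext e unfolding inj_on_def by auto
      moreover have "ends T t \<subseteq> TA" using endsT[OF eext] e by auto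
      ultimately show "t \<in> ET" by simp
    qed
  next
    show "ET \<subseteq> \<psi> ` XA"
    proof
      fix t assume t: "t \<in> ET"
      then obtain e where e: "e \<in> external_edges G \<phi>" "t = \<psi> e" using tpre by blast
      have eG: "e \<in> edges G" "card (\<phi> ` ends G e) = 2" using e unfolding external_edges_def by auto
      have "e \<notin> FF" using t e by auto
      then have "ends G e \<subseteq> A \<or> ends G e \<subseteq> BB" using edge_side eG by blast
      moreover have "\<not> ends G e \<subseteq> BB"
      proof
        assume "ends G e \<subseteq> BB"
        then have "ends T t \<subseteq> TB" using endsT[OF e(1)] e by auto
        then show False using ET_notTB t by blast
      qed
      ultimately have "e \<in> XA" using eG \<open>e \<notin> FF\<close> by auto
      then show "t \<in> \<psi> ` XA" using e by blast
    qed
  qed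
  moreover have "inj_on \<psi> XA" using inj XA_ext inj_on_subset by blast
  ultimately show ?thesis unfolding bij_betw_def by blast
qed

abbreviation "\<psi>1 \<equiv> \<psi>(e1' := a')"

lemma bij1: "bij_betw \<psi>1 (external_edges G1 \<phi>) (edges T1)"
proof -
  have b0: "bij_betw \<psi>1 XA ET"
    using psi_XA e1'_EA by (subst bij_betw_cong[where g = \<psi>]) auto
  show ?thesis
  proof (cases "p1 = p2")
    case True
    then show ?thesis unfolding extG1 T1_edges using b0 by simp
  next
    case False
    have "bij_betw \<psi>1 (insert e1' XA) (insert a' ET)"
      using b0 e1'_EA a'_ET by (simp add: bij_betw_def inj_on_insert) (auto simp: image_def)
    then show ?thesis unfolding extG1 T1_edges using False by simp
  qed
qed

lemma ends1: "e \<in> external_edges G1 \<phi> \<Longrightarrow> ends T1 (\<psi>1 e) = \<phi> ` ends G1 e"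
proof -
  assume e: "e \<in> external_edges G1 \<phi>"
  show ?thesis
  proof (cases "e = e1'")
    case True
    then have "p1 \<noteq> p2" using e unfolding extG1 using e1'_EA by (auto split: if_splits)
    then show ?thesis using True T1_ends' G1_ends' by simp
  next
    case False
    then have eX: "e \<in> XA" using e unfolding extG1 by (auto split: if_splits)
    then have "\<psi> e \<in> ET" using psi_XA unfolding bij_betw_def by blast
    then have "ends T1 (\<psi> e) = ends T (\<psi> e)" using ET_T1 by blast
    also have "\<dots> = \<phi> ` ends G e" using endsT XA_ext eX by blast
    finally show ?thesis using False G1_ends[OF False] by simp
  qed
qed

lemma cutA:
  assumes e: "e \<in> external_edges G1 \<phi>" and e': "e' \<in> external_edges G1 \<phi>" and ne': "e \<noteq> e'"
  shows "two_edge_cut G1 {e, e'} \<longleftrightarrow>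
    two_edge_cut G {if e = e1' then e1 else e, if e' = e1' then e1 else e'}"
proof -
  have eX: "e = e1' \<or> e \<in> XA" and eX': "e' = e1' \<or> e' \<in> XA" using e e' unfolding extG1 by (auto split: if_splits)
  have eG1: "e \<in> edges G1" "e' \<in> edges G1" using e e' unfolding external_edges_def by auto
  have L: "two_edge_cut G1 {e, e'} \<longleftrightarrow> \<not> allreach (del_edges G1 {e, e'})"
    using two_cut_iff[OF wfG1 G1_conn G1_bl eG1 ne'] .
  show ?thesis
  proof (cases "e = e1'")
    case True
    then have e'A: "e' \<in> XA" using eX' ne' by auto
    then have "e' \<in> edges G" "e1 \<noteq> e'" by auto
    then have R: "two_edge_cut G {e1, e'} \<longleftrightarrow> \<not> allreach (del_edges G {e1, e'})"
      using two_cut_iff[OF wf conn bl inE1] by blast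
    show ?thesis using L R cut_equiv2[of e'] e'A True ne' by auto
  next
    case False
    then have eA: "e \<in> XA" using eX by auto
    show ?thesis
    proof (cases "e' = e1'")
      case True
      then have "e \<in> edges G" "e \<noteq> e1" using eA by auto
      then have R: "two_edge_cut G {e, e1} \<longleftrightarrow> \<not> allreach (del_edges G {e, e1})"
        using two_cut_iff[OF wf conn bl _ inE1] by blast
      have "{e, e'} = {e1', e}" "{e, e1} = {e1, e}" using True by auto
      then show ?thesis using L R cut_equiv2[of e] eA True False by auto
    next
      case False2: False
      then have e'A: "e' \<in> XA" using eX' by auto
      then have R: "two_edge_cut G {e, e'} \<longleftrightarrow> \<not> allreach (del_edges G {e, e'})"
        using two_cut_iff[OF wf conn bl _ _ ne'] eA by blast
      show ?thesis using L R cut_equiv1[of e e'] eA e'A False False2 by auto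
    qed
  qed
qed

lemma cut1:
  assumes e: "e \<in> external_edges G1 \<phi>" and e': "e' \<in> external_edges G1 \<phi>" and ne': "e \<noteq> e'"
  shows "two_edge_cut G1 {e, e'} \<longleftrightarrow> on_common_cycle T1 (\<psi>1 e) (\<psi>1 e')"
proof -
  let ?r = "\<lambda>x. if x = e1' then e1 else x"
  have eX: "e = e1' \<or> e \<in> XA" and eX': "e' = e1' \<or> e' \<in> XA" using e e' unfolding extG1 by (auto split: if_splits)
  have rext: "?r e \<in> external_edges G \<phi>" "?r e' \<in> external_edges G \<phi>" using eX eX' e1ext XA_ext by auto
  have rne: "?r e \<noteq> ?r e'" using eX eX' ne' by auto
  have s1: "two_edge_cut G1 {e, e'} \<longleftrightarrow> on_common_cycle T (\<psi> (?r e)) (\<psi> (?r e'))"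
    using cutA[OF e e' ne'] cyc[OF rext rne] by simp
  have al: "\<psi>1 e \<in> edges T1" "\<psi>1 e' \<in> edges T1" using bij1 e e' unfolding bij_betw_def by auto
  have ab: "\<psi>1 e \<noteq> \<psi>1 e'" using bij1 e e' ne' unfolding bij_betw_def inj_on_def by blast
  have sig: "\<psi> (?r x) = (if \<psi>1 x = a' then aT else \<psi>1 x)" if x: "x = e1' \<or> x \<in> XA" for x
  proof (cases "x = e1'")
    case True then show ?thesis by simp
  next
    case False
    then have "x \<in> XA" using x by auto
    then have "\<psi> x \<in> ET" using psi_XA unfolding bij_betw_def by blast
    then have "\<psi> x \<noteq> a'" using a'_ET by blast
    then show ?thesis using False by simp
  qed
  show ?thesis using s1 cyc_equiv[OF al ab] sig[OF eX] sig[OF eX'] by simp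
qed

theorem main: "\<exists>\<psi>'. cactus_rep_2cuts G1 T1 \<phi> \<psi>'"
proof (intro exI[of _ \<psi>1])
  show "cactus_rep_2cuts G1 T1 \<phi> \<psi>1"
    unfolding cactus_rep_2cuts_def
  proof (intro conjI ballI impI)
    show "cactus T1" by (rule cactusT1)
    show "\<phi> ` verts G1 = verts T1" by simp
    show "bij_betw \<psi>1 (external_edges G1 \<phi>) (edges T1)" by (rule bij1)
  next
    fix u v assume "u \<in> verts G1" "v \<in> verts G1"
    then have uv: "u \<in> A" "v \<in> A" by auto
    then show "\<phi> u = \<phi> v \<longleftrightarrow> lambda_ge G1 3 u v" using lam[of u v] lambda_equiv[OF uv] AV by auto
  next
    fix e assume "e \<in> external_edges G1 \<phi>"
    then show "ends T1 (\<psi>1 e) = \<phi> ` ends G1 e" by (rule ends1)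
  next
    fix e e' assume "e \<in> external_edges G1 \<phi>" "e' \<in> external_edges G1 \<phi>" "e \<noteq> e'"
    then show "two_edge_cut G1 {e, e'} \<longleftrightarrow> on_common_cycle T1 (\<psi>1 e) (\<psi>1 e')" by (rule cut1)
  qed
qed

end


theorem lemma5:
  fixes G :: "('v, 'e) mgraph" and T :: "('n, 'f) mgraph"
    and \<phi> :: "'v \<Rightarrow> 'n" and \<psi> :: "'e \<Rightarrow> 'f"
    and e1 e2 e1' e2' :: 'e and a' b' :: 'f and A :: "'v set"
  assumes "wf_graph G" and "connected G" and "cubic G" and "bridgeless G"
    and "\<exists>F. two_edge_cut G F"
    and "cactus_rep_2cuts G T \<phi> \<psi>"
    and "two_edge_cut G {e1, e2}"
    and "A \<in> components (del_edges G {e1, e2})"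
    and "e1' \<notin> edges G" and "e2' \<notin> edges G"
    and "a' \<notin> edges T" and "b' \<notin> edges T"
  shows "(\<exists>\<psi>1. cactus_rep_2cuts (reduce G e1 e2 A e1')
             (reduce_noloop T (\<psi> e1) (\<psi> e2) (side_of T {\<psi> e1, \<psi> e2} (\<phi> ` A)) a') \<phi> \<psi>1)
       \<and> (\<exists>\<psi>2. cactus_rep_2cuts (reduce G e1 e2 (verts G - A) e2')
             (reduce_noloop T (\<psi> e1) (\<psi> e2) (side_of T {\<psi> e1, \<psi> e2} (\<phi> ` (verts G - A))) b') \<phi> \<psi>2)"
proof -
  note wf = assms(1) and conn = assms(2) and bl = assms(4) and rep = assms(6) and cut = assms(7)
    and comp = assms(8)
  obtain x1 y1 x2 y2 where S: "e1 \<noteq> e2" "e1 \<in> edges G" "e2 \<in> edges G" "A \<subseteq> verts G"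
   "\<forall>u\<in>A. \<forall>v\<in>A. reachable (del_edges G {e1, e2}) u v"
   "\<forall>u\<in>verts G - A. \<forall>v\<in>verts G - A. reachable (del_edges G {e1, e2}) u v"
   "\<forall>e\<in>edges G - {e1, e2}. \<forall>u\<in>ends G e. u \<in> A \<longrightarrow> ends G e \<subseteq> A"
   "ends G e1 = {x1, y1}" "ends G e2 = {x2, y2}" "x1 \<in> A" "x2 \<in> A" "y1 \<in> verts G - A" "y2 \<in> verts G - A"
    using struct[OF wf conn cut comp] by metis
  have Aconn: "\<And>u v. u \<in> A \<Longrightarrow> v \<in> A \<Longrightarrow> reachable (del_edges G {e1, e2}) u v" using S(5) by blast
  have Bconn: "\<And>u v. u \<in> verts G - A \<Longrightarrow> v \<in> verts G - A \<Longrightarrow> reachable (del_edges G {e1, e2}) u v"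
    using S(6) by blast
  have Acl: "\<And>e u. e \<in> edges G \<Longrightarrow> e \<notin> {e1, e2} \<Longrightarrow> u \<in> ends G e \<Longrightarrow> u \<in> A \<Longrightarrow> ends G e \<subseteq> A"
    using S(7) by blast
  have R1: "red G T \<phi> \<psi> e1 e2 e1' a' A x1 y1 x2 y2"
    by (rule red.intro[OF wf conn bl rep cut assms(9) assms(11) S(1) S(2) S(3) S(4) Aconn Bconn Acl
          S(8) S(9) S(10) S(11) S(12) S(13)])
  have BV: "verts G - A \<subseteq> verts G" by blast
  have AA: "verts G - (verts G - A) = A" using S(4) by blast
  have Aconn2: "\<And>u v. u \<in> verts G - (verts G - A) \<Longrightarrow> v \<in> verts G - (verts G - A) \<Longrightarrow> reachable (del_edges G {e1, e2}) u v"
    using Aconn AA by blast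
  have Bcl: "\<And>e u. e \<in> edges G \<Longrightarrow> e \<notin> {e1, e2} \<Longrightarrow> u \<in> ends G e \<Longrightarrow> u \<in> verts G - A \<Longrightarrow> ends G e \<subseteq> verts G - A"
  proof
    fix e u w assume a: "e \<in> edges G" "e \<notin> {e1, e2}" "u \<in> ends G e" "u \<in> verts G - A" "w \<in> ends G e"
    have EV: "ends G e \<subseteq> verts G" using wf a(1) unfolding wf_graph_def by blast
    show "w \<in> verts G - A"
    proof (rule ccontr)
      assume "w \<notin> verts G - A"
      then have "w \<in> A" using a(5) EV by blast
      then have "ends G e \<subseteq> A" using Acl a by blast
      then show False using a by blast
    qed
  qed
  have en1: "ends G e1 = {y1, x1}" and en2: "ends G e2 = {y2, x2}" using S(8) S(9) by (simp_all add: insert_commute)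
  have xB: "x1 \<in> verts G - (verts G - A)" "x2 \<in> verts G - (verts G - A)" using S(10) S(11) AA by auto
  have R2: "red G T \<phi> \<psi> e1 e2 e2' b' (verts G - A) y1 x1 y2 x2"
    by (rule red.intro[OF wf conn bl rep cut assms(10) assms(12) S(1) S(2) S(3) BV Bconn Aconn2 Bcl
          en1 en2 S(12) S(13) xB(1) xB(2)])
  show ?thesis using red.main[OF R1] red.main[OF R2] by blast
qed


end
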